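(* Let $\mathcal{O}$ be a complete discrete valuation ring of characteristic zero whose residue field $k$ has characteristic $p>0$. Let $G$ be a finite group, $N$ a normal subgroup of $G$, and $b$ a block of $\mathcal{O}N$ which is $G$-invariant. Put $A=\mathcal{O}Gb$ and $A_1=\mathcal{O}Nb$, both regarded as $G$-algebras via conjugation. Then for any subgroup $H$ of $G$ and any point $\hat{\alpha}$ of $H$ on $A$, there exist a point $\alpha$ of $H$ on $A_1$, an idempotent $\hat{i}\in\hat{\alpha}$ and an idempotent $j\in\alpha$ such that $\hat{i}\,j=j\,\hat{i}=\hat{i}$.
   Context: For a $G$-algebra $B$ (an $\mathcal{O}$-algebra with an action of $G$ by algebra automorphisms) and a subgroup $H\le G$, $B^H$ denotes the subalgebra of $H$-fixed elements. A point of $H$ on $B$ is a conjugacy class, under the unit group $(B^H)^{*}$, of primitive idempotents of $B^H$. Here $A=\mathcal{O}Gb$ is graded by $G/N$ with identity component $A_1=\mathcal{O}Nb$, and $G$ acts on both by conjugation. *)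

theory Defs
  imports "HOL-Algebra.Algebra"
begin

definition dvr_uniformizer :: "'o::idom \<Rightarrow> bool" where
  "dvr_uniformizer \<pi> \<longleftrightarrow> \<pi> \<noteq> 0 \<and> \<not> \<pi> dvd 1 \<and>
     (\<forall>x. x \<noteq> 0 \<longrightarrow> (\<exists>u n. u dvd 1 \<and> x = u * \<pi> ^ n))"

definition pi_adically_complete :: "'o::idom \<Rightarrow> bool" where
  "pi_adically_complete \<pi> \<longleftrightarrow>
     (\<forall>x::nat \<Rightarrow> 'o. (\<forall>n. \<pi> ^ n dvd (x (Suc n) - x n)) \<longrightarrow>
        (\<exists>l. \<forall>n. \<pi> ^ n dvd (l - x n)))"

text \<open>Elements of OG are coefficient functions vanishing outside the carrier.\<close>
definition galg :: "('g,'m) monoid_scheme \<Rightarrow> ('g \<Rightarrow> 'o::comm_ring_1) set" where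
  "galg G = {x. \<forall>g. g \<notin> carrier G \<longrightarrow> x g = 0}"

definition galg_on :: "'g set \<Rightarrow> ('g \<Rightarrow> 'o::comm_ring_1) set" where
  "galg_on N = {x. \<forall>g. g \<notin> N \<longrightarrow> x g = 0}"

definition galg_mult :: "('g,'m) monoid_scheme \<Rightarrow> ('g \<Rightarrow> 'o::comm_ring_1) \<Rightarrow> ('g \<Rightarrow> 'o) \<Rightarrow> ('g \<Rightarrow> 'o)" where
  "galg_mult G x y = (\<lambda>g. if g \<in> carrier G
      then (\<Sum>h\<in>carrier G. x h * y (inv\<^bsub>G\<^esub> h \<otimes>\<^bsub>G\<^esub> g)) else 0)"

text \<open>Conjugation action: gconj G g x = g x g^{-1}.\<close>
definition gconj :: "('g,'m) monoid_scheme \<Rightarrow> 'g \<Rightarrow> ('g \<Rightarrow> 'o::comm_ring_1) \<Rightarrow> ('g \<Rightarrow> 'o)" where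
  "gconj G g x = (\<lambda>y. if y \<in> carrier G then x (inv\<^bsub>G\<^esub> g \<otimes>\<^bsub>G\<^esub> y \<otimes>\<^bsub>G\<^esub> g) else 0)"

definition galg_idem :: "('g,'m) monoid_scheme \<Rightarrow> ('g \<Rightarrow> 'o::comm_ring_1) \<Rightarrow> bool" where
  "galg_idem G e \<longleftrightarrow> galg_mult G e e = e"

definition prim_idem :: "('g,'m) monoid_scheme \<Rightarrow> ('g \<Rightarrow> 'o::comm_ring_1) set \<Rightarrow> ('g \<Rightarrow> 'o) \<Rightarrow> bool" where
  "prim_idem G R e \<longleftrightarrow> e \<in> R \<and> galg_idem G e \<and> e \<noteq> (\<lambda>_. 0) \<and>
     \<not> (\<exists>e1\<in>R. \<exists>e2\<in>R. galg_idem G e1 \<and> galg_idem G e2 \<and> e1 \<noteq> (\<lambda>_. 0) \<and> e2 \<noteq> (\<lambda>_. 0) \<and>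
          galg_mult G e1 e2 = (\<lambda>_. 0) \<and> galg_mult G e2 e1 = (\<lambda>_. 0) \<and> e = (\<lambda>g. e1 g + e2 g))"

definition center_of :: "('g,'m) monoid_scheme \<Rightarrow> ('g \<Rightarrow> 'o::comm_ring_1) set \<Rightarrow> ('g \<Rightarrow> 'o) set" where
  "center_of G R = {z \<in> R. \<forall>x\<in>R. galg_mult G z x = galg_mult G x z}"

definition is_block :: "('g,'m) monoid_scheme \<Rightarrow> 'g set \<Rightarrow> ('g \<Rightarrow> 'o::comm_ring_1) \<Rightarrow> bool" where
  "is_block G N b \<longleftrightarrow> prim_idem G (center_of G (galg_on N)) b"

definition fixed_pts :: "('g,'m) monoid_scheme \<Rightarrow> 'g set \<Rightarrow> ('g \<Rightarrow> 'o::comm_ring_1) set \<Rightarrow> ('g \<Rightarrow> 'o) set" where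
  "fixed_pts G H B = {a \<in> B. \<forall>h\<in>H. gconj G h a = a}"

text \<open>Points of H on B (B has identity element unit_el): conjugacy classes under the unit
  group of B^H of primitive idempotents of B^H.\<close>
definition points :: "('g,'m) monoid_scheme \<Rightarrow> 'g set \<Rightarrow> ('g \<Rightarrow> 'o::comm_ring_1) set \<Rightarrow> ('g \<Rightarrow> 'o) \<Rightarrow> ('g \<Rightarrow> 'o) set set" where
  "points G H B unit_el = {P. \<exists>e. prim_idem G (fixed_pts G H B) e \<and>
      P = {galg_mult G (galg_mult G u e) v | u v.
             u \<in> fixed_pts G H B \<and> v \<in> fixed_pts G H B \<and>
             galg_mult G u v = unit_el \<and> galg_mult G v u = unit_el}}"

end

theory Submission
  imports Defs "HOL-Library.Function_Algebras"
begin

definition Dv :: "'o::idom \<Rightarrow> nat \<Rightarrow> ('g \<Rightarrow> 'o) \<Rightarrow> bool" where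
  "Dv \<pi> n x \<longleftrightarrow> (\<forall>g. \<pi>^n dvd x g)"

definition sm :: "'o::comm_ring_1 \<Rightarrow> ('g \<Rightarrow> 'o) \<Rightarrow> ('g \<Rightarrow> 'o)" where
  "sm c x = (\<lambda>g. c * x g)"

lemma uminus_apply[simp]: "(- f) x = - (f x)" by (simp add: fun_Compl_def)
lemma minus_apply[simp]: "(f - g) x = f x - g x" by (simp add: fun_diff_def)
lemma sm_apply[simp]: "sm c f x = c * f x" by (simp add: sm_def)

lemma fsum_apply: "(\<Sum>k\<in>K. f k) x = (\<Sum>k\<in>K. f k x)"
  by (induction K rule: infinite_finite_induct) auto

lemma Dv_add: "Dv p n x \<Longrightarrow> Dv p n y \<Longrightarrow> Dv p n (x + y)"
  by (simp add: Dv_def)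
lemma Dv_diff: "Dv p n x \<Longrightarrow> Dv p n y \<Longrightarrow> Dv p n (x - y)"
  by (simp add: Dv_def)
lemma Dv_uminus: "Dv p n x \<Longrightarrow> Dv p n (- x)"
  by (simp add: Dv_def)
lemma Dv_zero[simp]: "Dv p n 0"
  by (simp add: Dv_def)
lemma Dv_0[simp]: "Dv p 0 x"
  by (simp add: Dv_def)
lemma Dv_sm: "Dv p n x \<Longrightarrow> Dv p n (sm c x)"
  by (simp add: Dv_def)
lemma Dv_mono: "m \<le> n \<Longrightarrow> Dv p n x \<Longrightarrow> Dv p m x"
  unfolding Dv_def by (meson dvd_trans le_imp_power_dvd)
lemma Dv_minus_comm: "Dv p n (x - y) \<Longrightarrow> Dv p n (y - x)"
  unfolding Dv_def by (metis dvd_minus_iff minus_apply minus_diff_eq)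

lemma Dv_sep:
  assumes u: "dvr_uniformizer \<pi>" and d: "\<forall>n. Dv \<pi> n x"
  shows "x = 0"
proof
  fix g
  show "x g = 0 g"
  proof (rule ccontr)
    assume "x g \<noteq> 0 g"
    then have nz: "x g \<noteq> 0" by simp
    then obtain v k where v: "v dvd 1" "x g = v * \<pi>^k" using u unfolding dvr_uniformizer_def by blast
    have "\<pi>^(Suc k) dvd v * \<pi>^k" using d v unfolding Dv_def by metis
    then have "\<pi> * \<pi>^k dvd v * \<pi>^k" by simp
    moreover have "\<pi>^k \<noteq> 0" using u unfolding dvr_uniformizer_def by simp
    moreover have pz: "\<pi> \<noteq> 0" using u unfolding dvr_uniformizer_def by simp
    ultimately have "\<pi> dvd v" by simp
    then have "\<pi> dvd 1" using v(1) dvd_trans by blast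
    then show False using u unfolding dvr_uniformizer_def by simp
  qed
qed

context group begin

lemma aux_cancel: "x \<in> carrier G \<Longrightarrow> y \<in> carrier G \<Longrightarrow> x \<otimes> (inv x \<otimes> y) = y"
  by (simp add: m_assoc[symmetric])
lemma aux_cancel2: "x \<in> carrier G \<Longrightarrow> y \<in> carrier G \<Longrightarrow> inv x \<otimes> (x \<otimes> y) = y"
  by (simp add: m_assoc[symmetric])

lemma gw1: "h \<in> carrier G \<Longrightarrow> a \<in> carrier G \<Longrightarrow> inv h \<otimes> (h \<otimes> a \<otimes> inv h) \<otimes> h = a"
  by (simp add: m_assoc aux_cancel2)
lemma gw2: "h \<in> carrier G \<Longrightarrow> a \<in> carrier G \<Longrightarrow> g \<in> carrier G \<Longrightarrow>
   inv h \<otimes> (inv (h \<otimes> a \<otimes> inv h) \<otimes> g) \<otimes> h = inv a \<otimes> (inv h \<otimes> g \<otimes> h)"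
  by (simp add: m_assoc inv_mult_group aux_cancel2)
lemma gw3: "h \<in> carrier G \<Longrightarrow> a \<in> carrier G \<Longrightarrow> h \<otimes> (inv h \<otimes> a \<otimes> h) \<otimes> inv h = a"
  by (simp add: m_assoc aux_cancel)
lemma gw4: "k \<in> carrier G \<Longrightarrow> a \<in> carrier G \<Longrightarrow> g \<in> carrier G \<Longrightarrow> inv (k \<otimes> a) \<otimes> g = inv a \<otimes> (inv k \<otimes> g)"
  by (simp add: m_assoc inv_mult_group)
lemma gw5: "g \<in> carrier G \<Longrightarrow> m \<in> carrier G \<Longrightarrow> inv (g \<otimes> inv m) \<otimes> g = m"
  by (simp add: m_assoc inv_mult_group aux_cancel2)
lemma gw6: "g \<in> carrier G \<Longrightarrow> h \<in> carrier G \<Longrightarrow> g \<otimes> inv (inv h \<otimes> g) = h"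
  by (simp add: m_assoc inv_mult_group aux_cancel)

lemma M_galg: "galg_mult G x y \<in> galg G"
  by (simp add: galg_mult_def galg_def)

lemma M_out: "g \<notin> carrier G \<Longrightarrow> galg_mult G x y g = 0"
  by (simp add: galg_mult_def)

lemma M_in: "g \<in> carrier G \<Longrightarrow> galg_mult G x y g = (\<Sum>h\<in>carrier G. x h * y (inv h \<otimes> g))"
  by (simp add: galg_mult_def)

lemma M_assoc:
  assumes fin: "finite (carrier G)"
  shows "galg_mult G (galg_mult G x y) z = galg_mult G x (galg_mult G y z)"
proof
  fix g
  show "galg_mult G (galg_mult G x y) z g = galg_mult G x (galg_mult G y z) g"
  proof (cases "g \<in> carrier G")
    case False then show ?thesis by (simp add: M_out)
  next
    case g: True
    have "galg_mult G (galg_mult G x y) z g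
        = (\<Sum>h\<in>carrier G. (\<Sum>k\<in>carrier G. x k * y (inv k \<otimes> h)) * z (inv h \<otimes> g))"
      using g by (simp add: M_in)
    also have "\<dots> = (\<Sum>k\<in>carrier G. \<Sum>h\<in>carrier G. x k * (y (inv k \<otimes> h) * z (inv h \<otimes> g)))"
      by (subst sum.swap) (simp add: sum_distrib_right mult.assoc)
    also have "\<dots> = (\<Sum>k\<in>carrier G. x k * (\<Sum>m\<in>carrier G. y m * z (inv m \<otimes> (inv k \<otimes> g))))"
    proof (rule sum.cong[OF refl])
      fix k assume k: "k \<in> carrier G"
      have "(\<Sum>h\<in>carrier G. y (inv k \<otimes> h) * z (inv h \<otimes> g))
          = (\<Sum>m\<in>carrier G. y m * z (inv m \<otimes> (inv k \<otimes> g)))"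
        apply (rule sum.reindex_bij_witness[where i="\<lambda>m. k \<otimes> m" and j="\<lambda>h. inv k \<otimes> h"])
        using k g by (simp_all add: gw4 aux_cancel aux_cancel2)
      then show "(\<Sum>h\<in>carrier G. x k * (y (inv k \<otimes> h) * z (inv h \<otimes> g)))
          = x k * (\<Sum>m\<in>carrier G. y m * z (inv m \<otimes> (inv k \<otimes> g)))"
        by (simp only: sum_distrib_left[symmetric])
    qed
    also have "\<dots> = galg_mult G x (galg_mult G y z) g"
      using g by (simp add: M_in)
    finally show ?thesis .
  qed
qed

lemma M_add_l: "galg_mult G (x + y) z = galg_mult G x z + galg_mult G y z"
  by (rule ext) (simp add: galg_mult_def sum.distrib distrib_right)
lemma M_add_r: "galg_mult G z (x + y) = galg_mult G z x + galg_mult G z y"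
  by (rule ext) (simp add: galg_mult_def sum.distrib distrib_left)
lemma M_uminus_l: "galg_mult G (- x) z = - galg_mult G x z"
  by (rule ext) (simp add: galg_mult_def sum_negf)
lemma M_uminus_r: "galg_mult G z (- x) = - galg_mult G z x"
  by (rule ext) (simp add: galg_mult_def sum_negf)
lemma M_diff_l: "galg_mult G (x - y) z = galg_mult G x z - galg_mult G y z"
  by (rule ext) (simp add: galg_mult_def sum_subtractf left_diff_distrib)
lemma M_diff_r: "galg_mult G z (x - y) = galg_mult G z x - galg_mult G z y"
  by (rule ext) (simp add: galg_mult_def sum_subtractf right_diff_distrib)
lemma M_sm_l: "galg_mult G (sm c x) z = sm c (galg_mult G x z)"
  by (rule ext) (simp add: galg_mult_def sum_distrib_left mult.assoc)
lemma M_sm_r: "galg_mult G z (sm c x) = sm c (galg_mult G z x)"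
  by (rule ext) (simp add: galg_mult_def sum_distrib_left mult.left_commute)
lemma M_zero_l[simp]: "galg_mult G 0 z = 0"
  by (rule ext) (simp add: galg_mult_def)
lemma M_zero_r[simp]: "galg_mult G z 0 = 0"
  by (rule ext) (simp add: galg_mult_def)
lemma M_zero_l'[simp]: "galg_mult G (\<lambda>_. 0) z = 0"
  by (rule ext) (simp add: galg_mult_def)
lemma M_zero_r'[simp]: "galg_mult G z (\<lambda>_. 0) = 0"
  by (rule ext) (simp add: galg_mult_def)

lemma M_sum_l: "galg_mult G (\<Sum>k\<in>K. f k) z = (\<Sum>k\<in>K. galg_mult G (f k) z)"
  proof (induction K rule: infinite_finite_induct)
  case (insert x F) then show ?case by (simp only: sum.insert[OF insert(1,2)] M_add_l insert(3))
qed simp_all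
lemma M_sum_r: "galg_mult G z (\<Sum>k\<in>K. f k) = (\<Sum>k\<in>K. galg_mult G z (f k))"
  proof (induction K rule: infinite_finite_induct)
  case (insert x F) then show ?case by (simp only: sum.insert[OF insert(1,2)] M_add_r insert(3))
qed simp_all

lemma Dv_M_l: "Dv p n x \<Longrightarrow> Dv p n (galg_mult G x y)"
  unfolding Dv_def galg_mult_def by (auto intro!: dvd_sum)
lemma Dv_M_r: "Dv p n x \<Longrightarrow> Dv p n (galg_mult G y x)"
  unfolding Dv_def galg_mult_def by (auto intro!: dvd_sum)
lemma Dv_M_both:
  assumes x: "Dv p m x" and y: "Dv p n y"
  shows "Dv p (m + n) (galg_mult G x y)"
  unfolding Dv_def
proof
  fix g
  have "p^(m+n) dvd x h * y k" for h k
    unfolding power_add by (rule mult_dvd_mono) (use x y in \<open>auto simp: Dv_def\<close>)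
  then show "p^(m+n) dvd galg_mult G x y g"
    unfolding galg_mult_def by (auto intro!: dvd_sum)
qed

lemma gconj_in: "y \<in> carrier G \<Longrightarrow> gconj G h x y = x (inv h \<otimes> y \<otimes> h)"
  by (simp add: gconj_def)
lemma gconj_add: "gconj G h (x + y) = gconj G h x + gconj G h y"
  by (rule ext) (simp add: gconj_def)
lemma gconj_diff: "gconj G h (x - y) = gconj G h x - gconj G h y"
  by (rule ext) (simp add: gconj_def)
lemma gconj_uminus: "gconj G h (- x) = - gconj G h x"
  by (rule ext) (simp add: gconj_def)
lemma gconj_sm: "gconj G h (sm c x) = sm c (gconj G h x)"
  by (rule ext) (simp add: gconj_def)
lemma gconj_zero[simp]: "gconj G h 0 = 0"
  by (rule ext) (simp add: gconj_def)
lemma Dv_gconj: "Dv p n x \<Longrightarrow> Dv p n (gconj G h x)"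
  unfolding Dv_def gconj_def by auto

lemma gconj_M:
  assumes h: "h \<in> carrier G"
  shows "gconj G h (galg_mult G x y) = galg_mult G (gconj G h x) (gconj G h y)"
proof
  fix g
  show "gconj G h (galg_mult G x y) g = galg_mult G (gconj G h x) (gconj G h y) g"
  proof (cases "g \<in> carrier G")
    case False then show ?thesis by (simp add: M_out gconj_def)
  next
    case g: True
    have "gconj G h (galg_mult G x y) g = galg_mult G x y (inv h \<otimes> g \<otimes> h)"
      using g by (simp add: gconj_def)
    also have "\<dots> = (\<Sum>k\<in>carrier G. x k * y (inv k \<otimes> (inv h \<otimes> g \<otimes> h)))"
      by (rule M_in) (simp add: g h)
    also have "\<dots> = (\<Sum>k\<in>carrier G. x (inv h \<otimes> k \<otimes> h) * y (inv h \<otimes> (inv k \<otimes> g) \<otimes> h))"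
      apply (rule sum.reindex_bij_witness[where i="\<lambda>k. inv h \<otimes> k \<otimes> h" and j="\<lambda>m. h \<otimes> m \<otimes> inv h"])
      using g h by (simp_all add: gw1 gw2 gw3)
    also have "\<dots> = (\<Sum>k\<in>carrier G. gconj G h x k * gconj G h y (inv k \<otimes> g))"
      by (rule sum.cong) (simp_all add: gconj_in g h)
    also have "\<dots> = galg_mult G (gconj G h x) (gconj G h y) g"
      by (rule M_in[symmetric]) (rule g)
    finally show ?thesis .
  qed
qed

lemma M_central:
  assumes binv: "\<forall>g\<in>carrier G. gconj G g b = b"
  shows "galg_mult G b x = galg_mult G x b"
proof
  fix g
  show "galg_mult G b x g = galg_mult G x b g"
  proof (cases "g \<in> carrier G")
    case False then show ?thesis by (simp add: M_out)
  next
    case g: True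
    have bi: "b (g \<otimes> inv m) = b (inv m \<otimes> g)" if m: "m \<in> carrier G" for m
    proof -
      have gm: "g \<otimes> inv m \<in> carrier G" using g m by simp
      have "b (g \<otimes> inv m) = gconj G g b (g \<otimes> inv m)" using binv g by simp
      also have "\<dots> = b (inv g \<otimes> (g \<otimes> inv m) \<otimes> g)" by (rule gconj_in[OF gm])
      also have "inv g \<otimes> (g \<otimes> inv m) \<otimes> g = inv m \<otimes> g"
        using g m by (simp add: m_assoc aux_cancel2)
      finally show ?thesis .
    qed
    have "galg_mult G b x g = (\<Sum>h\<in>carrier G. b h * x (inv h \<otimes> g))"
      using g by (simp add: M_in)
    also have "\<dots> = (\<Sum>m\<in>carrier G. b (g \<otimes> inv m) * x m)"
      apply (rule sum.reindex_bij_witness[where i="\<lambda>m. g \<otimes> inv m" and j="\<lambda>h. inv h \<otimes> g"])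
      using g by (simp_all add: gw5 gw6)
    also have "\<dots> = (\<Sum>m\<in>carrier G. x m * b (inv m \<otimes> g))"
      by (rule sum.cong[OF refl]) (simp add: bi mult.commute)
    also have "\<dots> = galg_mult G x b g"
      using g by (simp add: M_in)
    finally show ?thesis .
  qed
qed

lemma galg_on_M:
  assumes N: "subgroup N G" and x: "x \<in> galg_on N" and y: "y \<in> galg_on N"
  shows "galg_mult G x y \<in> galg_on N"
  unfolding galg_on_def
proof (intro CollectI allI impI)
  fix g assume gN: "g \<notin> N"
  show "galg_mult G x y g = 0"
  proof (cases "g \<in> carrier G")
    case False then show ?thesis by (simp add: M_out)
  next
    case g: True
    have "x h * y (inv h \<otimes> g) = 0" if h: "h \<in> carrier G" for h
    proof (cases "h \<in> N \<and> inv h \<otimes> g \<in> N")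
      case True
      then have "h \<otimes> (inv h \<otimes> g) \<in> N" using subgroup.m_closed[OF N] by simp
      then have "g \<in> N" using h g by (simp add: aux_cancel)
      then show ?thesis using gN by simp
    next
      case False
      then have "x h = 0 \<or> y (inv h \<otimes> g) = 0" using x y unfolding galg_on_def by blast
      then show ?thesis by auto
    qed
    then show ?thesis using g by (simp add: M_in)
  qed
qed

lemma galg_on_galg: "subgroup N G \<Longrightarrow> galg_on N \<subseteq> galg G"
  unfolding galg_on_def galg_def using subgroup.subset by blast

end

context ring begin

lemmas rsimps = ring_simprules r_one

lemma cancel_l: "a \<in> carrier R \<Longrightarrow> b \<in> carrier R \<Longrightarrow> c \<in> carrier R \<Longrightarrow> a \<otimes> b = \<one> \<Longrightarrow> a \<otimes> (b \<otimes> c) = c"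
  by (simp add: m_assoc[symmetric])

lemma units_lr:
  assumes x: "x \<in> carrier R" and l: "l \<in> carrier R" and r: "r \<in> carrier R"
    and lx: "l \<otimes> x = \<one>" and xr: "x \<otimes> r = \<one>"
  shows "x \<in> Units R"
proof -
  have "l = l \<otimes> (x \<otimes> r)" using xr l by simp
  also have "\<dots> = (l \<otimes> x) \<otimes> r" using l x r by (simp add: m_assoc)
  also have "\<dots> = r" using lx r by simp
  finally have "l = r" .
  then show ?thesis unfolding Units_def using x l lx xr by auto
qed

lemma one_minus_swap:
  assumes xa: "xa \<in> carrier R" and ya: "ya \<in> carrier R" and U: "\<one> \<ominus> xa \<otimes> ya \<in> Units R"
  shows "\<one> \<ominus> ya \<otimes> xa \<in> Units R"
proof -
  obtain za where Zf: "za \<in> carrier R" "(\<one> \<ominus> xa \<otimes> ya) \<otimes> za = \<one>" "za \<otimes> (\<one> \<ominus> xa \<otimes> ya) = \<one>"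
    using U unfolding Units_def by blast
  have c: "\<one> \<ominus> ya \<otimes> xa \<in> carrier R" "\<one> \<oplus> ya \<otimes> za \<otimes> xa \<in> carrier R" using xa ya Zf(1) by auto
  have e1: "(\<one> \<ominus> ya \<otimes> xa) \<otimes> (\<one> \<oplus> ya \<otimes> za \<otimes> xa) = \<one> \<ominus> ya \<otimes> xa \<oplus> ya \<otimes> ((\<one> \<ominus> xa \<otimes> ya) \<otimes> za) \<otimes> xa"
    using xa ya Zf(1) by (simp add: rsimps; algebra?)
  have e2: "(\<one> \<oplus> ya \<otimes> za \<otimes> xa) \<otimes> (\<one> \<ominus> ya \<otimes> xa) = \<one> \<ominus> ya \<otimes> xa \<oplus> ya \<otimes> (za \<otimes> (\<one> \<ominus> xa \<otimes> ya)) \<otimes> xa"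
    using xa ya Zf(1) by (simp add: rsimps; algebra?)
  have "(\<one> \<ominus> ya \<otimes> xa) \<otimes> (\<one> \<oplus> ya \<otimes> za \<otimes> xa) = \<one>"
    unfolding e1 Zf(2) using xa ya Zf(1) by (simp add: rsimps; algebra?)
  moreover have "(\<one> \<oplus> ya \<otimes> za \<otimes> xa) \<otimes> (\<one> \<ominus> ya \<otimes> xa) = \<one>"
    unfolding e2 Zf(3) using xa ya Zf(1) by (simp add: rsimps; algebra?)
  ultimately show ?thesis unfolding Units_def using c by blast
qed

lemma conj_below:
  assumes e: "e \<in> carrier R" and j1: "j1 \<in> carrier R" and j2: "j2 \<in> carrier R" and y: "y \<in> carrier R"
    and ee: "e \<otimes> e = e" and jj1: "j1 \<otimes> j1 = j1"
    and jje: "(j1 \<oplus> j2) \<otimes> e = e"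
    and ey: "e \<otimes> y = y" and ye: "y \<otimes> e = y"
    and xy: "(e \<otimes> j1 \<otimes> e) \<otimes> y = e" and yx: "y \<otimes> (e \<otimes> j1 \<otimes> e) = e"
  shows "\<exists>u\<in>carrier R. \<exists>v\<in>carrier R. u \<otimes> v = \<one> \<and> v \<otimes> u = \<one> \<and>
            j1 \<otimes> (u \<otimes> e \<otimes> v) = u \<otimes> e \<otimes> v \<and> (u \<otimes> e \<otimes> v) \<otimes> j1 = u \<otimes> e \<otimes> v"
proof -
  define x where "x = e \<otimes> j1 \<otimes> e"
  have x: "x \<in> carrier R" using e j1 unfolding x_def by simp
  have j1e: "j1 \<otimes> e = e \<ominus> j2 \<otimes> e"
  proof -
    have "j1 \<otimes> e \<oplus> j2 \<otimes> e = e" using jje e j1 j2 by (simp add: l_distr)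
    then show ?thesis using e j1 j2 by (metis add.m_closed minus_equality m_closed r_neg r_neg1 a_minus_def add.inv_closed a_assoc a_comm)
  qed
  have ej2e: "e \<otimes> j2 \<otimes> e = e \<ominus> x"
  proof -
    have "e \<otimes> (j1 \<otimes> e) = e \<otimes> e \<ominus> e \<otimes> j2 \<otimes> e" unfolding j1e using e j1 j2 by (simp add: rsimps; algebra?)
    then have "x = e \<ominus> e \<otimes> j2 \<otimes> e" unfolding x_def using e j1 ee by (simp add: m_assoc)
    then show ?thesis using e j2 x by (simp add: rsimps; algebra?)
  qed
  have xe: "x \<otimes> e = x" unfolding x_def using e j1 ee by (simp add: m_assoc)
  have ex: "e \<otimes> x = x" unfolding x_def using e j1 ee by (simp add: m_assoc[symmetric])
  have ua: "\<one> \<ominus> (e \<otimes> j2) \<otimes> e \<in> Units R"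
  proof -
    have c1: "\<one> \<ominus> e \<oplus> x \<in> carrier R" "\<one> \<ominus> e \<oplus> y \<in> carrier R" using e x y by auto
    have q: "\<one> \<ominus> (e \<otimes> j2) \<otimes> e = \<one> \<ominus> e \<oplus> x" using ej2e e x by (simp add: rsimps; algebra?)
    have p1: "(\<one> \<ominus> e \<oplus> x) \<otimes> (\<one> \<ominus> e \<oplus> y) = \<one> \<ominus> e \<ominus> e \<oplus> e \<otimes> e \<oplus> y \<ominus> e \<otimes> y \<oplus> x \<ominus> x \<otimes> e \<oplus> x \<otimes> y"
      using e x y by (simp add: rsimps; algebra?)
    have p2: "(\<one> \<ominus> e \<oplus> y) \<otimes> (\<one> \<ominus> e \<oplus> x) = \<one> \<ominus> e \<ominus> e \<oplus> e \<otimes> e \<oplus> x \<ominus> e \<otimes> x \<oplus> y \<ominus> y \<otimes> e \<oplus> y \<otimes> x"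
      using e x y by (simp add: rsimps; algebra?)
    have "(\<one> \<ominus> e \<oplus> x) \<otimes> (\<one> \<ominus> e \<oplus> y) = \<one>"
      unfolding p1 ee ey xe xy[folded x_def] using e x y by (simp add: rsimps; algebra?)
    moreover have "(\<one> \<ominus> e \<oplus> y) \<otimes> (\<one> \<ominus> e \<oplus> x) = \<one>"
      unfolding p2 ee ex ye yx[folded x_def] using e x y by (simp add: rsimps; algebra?)
    ultimately show ?thesis unfolding q Units_def using c1 by blast
  qed
  have ub: "\<one> \<ominus> e \<otimes> (e \<otimes> j2) \<in> Units R"
    by (rule one_minus_swap[OF _ e ua]) (use e j2 in simp)
  have ub': "\<one> \<ominus> e \<otimes> j2 \<in> Units R"
    using ub e j2 ee by (simp add: m_assoc[symmetric])
  have uc: "\<one> \<ominus> j2 \<otimes> e \<in> Units R"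
    by (rule one_minus_swap[OF e j2 ub'])
  define W where "W = \<one> \<ominus> j2 \<otimes> e"
  define W' where "W' = inv W"
  have W: "W \<in> carrier R" "W' \<in> carrier R" "W \<otimes> W' = \<one>" "W' \<otimes> W = \<one>"
    using uc unfolding W_def W'_def by auto
  have We: "W \<otimes> e = j1 \<otimes> e"
    unfolding W_def j1e using e j2 ee by (simp add: rsimps; algebra?)
  define f where "f = W \<otimes> e \<otimes> W'"
  have f: "f \<in> carrier R" unfolding f_def using W e by simp
  have j1f: "j1 \<otimes> f = f"
    unfolding f_def We using j1 e W jj1 by (simp add: m_assoc[symmetric])
  have ff: "f \<otimes> f = f"
  proof -
    have a1: "W' \<otimes> (W \<otimes> (e \<otimes> W')) = e \<otimes> W'" using W e by (simp add: m_assoc[symmetric])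
    have a2: "e \<otimes> (e \<otimes> W') = e \<otimes> W'" using W e ee by (simp add: m_assoc[symmetric])
    have "f \<otimes> f = W \<otimes> (e \<otimes> (W' \<otimes> (W \<otimes> (e \<otimes> W'))))" unfolding f_def using W e by (simp add: m_assoc)
    then show ?thesis unfolding f_def a1 a2 using W e by (simp add: m_assoc)
  qed
  define g where "g = f \<otimes> j1"
  have g: "g \<in> carrier R" unfolding g_def using f j1 by simp
  have fg: "f \<otimes> g = g" unfolding g_def using f j1 ff by (simp add: m_assoc[symmetric])
  have gf: "g \<otimes> f = f" unfolding g_def using f j1 j1f ff by (simp add: m_assoc)
  have gj1: "g \<otimes> j1 = g" unfolding g_def using f j1 jj1 by (simp add: m_assoc)
  have j1g: "j1 \<otimes> g = g" unfolding g_def using f j1 j1f by (simp add: m_assoc[symmetric])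
  have gg: "g \<otimes> g = g"
  proof -
    have "g \<otimes> g = (g \<otimes> f) \<otimes> j1" unfolding g_def using f j1 by (simp add: m_assoc)
    then show ?thesis using gf by (simp add: g_def)
  qed
  define U where "U = \<one> \<oplus> f \<ominus> g"
  define U' where "U' = \<one> \<ominus> f \<oplus> g"
  have U: "U \<in> carrier R" "U' \<in> carrier R" unfolding U_def U'_def using f g by auto
  have q1: "U \<otimes> U' = \<one> \<oplus> f \<otimes> g \<ominus> g \<ominus> f \<otimes> f \<oplus> g \<otimes> f \<ominus> g \<otimes> g \<oplus> g"
    unfolding U_def U'_def using f g by (simp add: rsimps; algebra?)
  have UU': "U \<otimes> U' = \<one>" unfolding q1 fg gf ff gg using f g by (simp add: rsimps; algebra?)
  have q2: "U' \<otimes> U = \<one> \<oplus> f \<ominus> g \<ominus> f \<ominus> f \<otimes> f \<oplus> f \<otimes> g \<oplus> g \<oplus> g \<otimes> f \<ominus> g \<otimes> g"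
    unfolding U_def U'_def using f g by (simp add: rsimps; algebra?)
  have U'U: "U' \<otimes> U = \<one>" unfolding q2 fg gf ff gg using f g by (simp add: rsimps; algebra?)
  have q3: "U \<otimes> f \<otimes> U' = (f \<oplus> f \<otimes> f \<ominus> g \<otimes> f) \<ominus> (f \<oplus> f \<otimes> f \<ominus> g \<otimes> f) \<otimes> f \<oplus> (f \<oplus> f \<otimes> f \<ominus> g \<otimes> f) \<otimes> g"
    unfolding U_def U'_def using f g by (simp add: rsimps; algebra?)
  have UfU: "U \<otimes> f \<otimes> U' = g"
  proof -
    have "f \<oplus> f \<otimes> f \<ominus> g \<otimes> f = f" unfolding ff gf using f by (simp add: rsimps; algebra?)
    then show ?thesis unfolding q3 using f g ff fg by (simp add: rsimps; algebra?)
  qed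
  define u where "u = U \<otimes> W"
  define v where "v = W' \<otimes> U'"
  have uev: "u \<otimes> e \<otimes> v = g"
  proof -
    have "u \<otimes> e \<otimes> v = U \<otimes> f \<otimes> U'" unfolding u_def v_def f_def using U W(1,2) e by (simp add: m_assoc)
    then show ?thesis using UfU by simp
  qed
  have uv: "u \<otimes> v = \<one>"
  proof -
    have "u \<otimes> v = U \<otimes> (W \<otimes> W') \<otimes> U'" unfolding u_def v_def using U W(1,2) by (simp add: m_assoc)
    then show ?thesis using W U UU' cancel_l[of W W' U'] by simp
  qed
  have vu: "v \<otimes> u = \<one>"
  proof -
    have "v \<otimes> u = W' \<otimes> (U' \<otimes> U) \<otimes> W" unfolding u_def v_def using U W(1,2) by (simp add: m_assoc)
    then show ?thesis using W U U'U cancel_l[of U' U W] by simp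
  qed
  show ?thesis
    by (rule bexI[where x=u], rule bexI[where x=v])
       (use uv vu uev j1g gj1 U W in \<open>auto simp: u_def v_def\<close>)
qed

end


definition Cor :: "('g,'m) monoid_scheme \<Rightarrow> 'g set \<Rightarrow> ('g \<Rightarrow> 'o::comm_ring_1) \<Rightarrow> ('g \<Rightarrow> 'o) set" where
  "Cor G H e = {x \<in> galg G. (\<forall>h\<in>H. gconj G h x = x) \<and> galg_mult G e x = x \<and> galg_mult G x e = x}"

definition RR :: "('g,'m) monoid_scheme \<Rightarrow> ('g \<Rightarrow> 'o::comm_ring_1) set \<Rightarrow> ('g \<Rightarrow> 'o) \<Rightarrow> ('g \<Rightarrow> 'o) ring" where
  "RR G S e = \<lparr>carrier = S, monoid.mult = galg_mult G, monoid.one = e, ring.zero = 0, ring.add = (+)\<rparr>"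

lemma RR_simps[simp]: "carrier (RR G S e) = S" "monoid.mult (RR G S e) = galg_mult G"
  "monoid.one (RR G S e) = e" "ring.zero (RR G S e) = 0" "ring.add (RR G S e) = (+)"
  by (simp_all add: RR_def)

fun mp :: "('g,'m) monoid_scheme \<Rightarrow> ('g \<Rightarrow> 'o::comm_ring_1) \<Rightarrow> ('g \<Rightarrow> 'o) \<Rightarrow> nat \<Rightarrow> ('g \<Rightarrow> 'o)" where
  "mp G e d 0 = e"
| "mp G e d (Suc n) = galg_mult G d (mp G e d n)"

lemma galg_add: "x \<in> galg G \<Longrightarrow> y \<in> galg G \<Longrightarrow> x + y \<in> galg G" by (simp add: galg_def)
lemma galg_diff: "x \<in> galg G \<Longrightarrow> y \<in> galg G \<Longrightarrow> x - y \<in> galg G" by (simp add: galg_def)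
lemma galg_uminus: "x \<in> galg G \<Longrightarrow> - x \<in> galg G" by (simp add: galg_def)
lemma galg_zero: "0 \<in> galg G" by (simp add: galg_def)
lemma galg_sm: "x \<in> galg G \<Longrightarrow> sm c x \<in> galg G" by (simp add: galg_def)
lemma galg_sum: "(\<And>k. k \<in> K \<Longrightarrow> f k \<in> galg G) \<Longrightarrow> (\<Sum>k\<in>K. f k) \<in> galg G"
  by (simp add: galg_def fsum_apply)

lemma elem_sep:
  assumes u: "dvr_uniformizer \<pi>" and d: "\<forall>n. \<pi>^n dvd a"
  shows "a = 0"
proof -
  have "(\<lambda>_::unit. a) = 0" by (rule Dv_sep[OF u]) (simp add: Dv_def d)
  then show ?thesis by (metis zero_fun_apply)
qed

lemma nondvd_unit:
  assumes u: "dvr_uniformizer \<pi>" and nd: "\<not> \<pi> dvd a"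
  shows "a dvd 1"
proof -
  have "a \<noteq> 0" using nd by auto
  then obtain v k where v: "v dvd 1" "a = v * \<pi>^k" using u unfolding dvr_uniformizer_def by blast
  have "k = 0"
  proof (rule ccontr)
    assume "k \<noteq> 0"
    then have "\<pi> dvd \<pi>^k" by (simp add: dvd_power)
    then show False using nd v by simp
  qed
  then show ?thesis using v by simp
qed

lemma unit_nondvd:
  assumes u: "dvr_uniformizer \<pi>" and a: "a dvd 1"
  shows "\<not> \<pi> dvd a"
  using u a dvd_trans unfolding dvr_uniformizer_def by blast

locale cor = group G for G (structure) +
  fixes H :: "'a set" and e :: "'a \<Rightarrow> 'o::idom" and \<pi> :: 'o
  assumes fin: "finite (carrier G)" and Hsub: "subgroup H G" and e_galg: "e \<in> galg G"
    and e_idem: "galg_mult G e e = e" and e_fix: "\<forall>h\<in>H. gconj G h e = e"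
    and uni: "dvr_uniformizer \<pi>" and cpl: "pi_adically_complete \<pi>"
begin

abbreviation "C \<equiv> Cor G H e"
abbreviation "M \<equiv> galg_mult G"
abbreviation "R \<equiv> RR G C e"

lemma Hcar: "h \<in> H \<Longrightarrow> h \<in> carrier G"
  using Hsub subgroup.subset by blast

lemma MA: "M (M x y) z = M x (M y z)"
  by (rule M_assoc[OF fin])

lemma C_galg: "x \<in> C \<Longrightarrow> x \<in> galg G" by (simp add: Cor_def)
lemma C_fix: "x \<in> C \<Longrightarrow> h \<in> H \<Longrightarrow> gconj G h x = x" by (simp add: Cor_def)
lemma C_l: "x \<in> C \<Longrightarrow> M e x = x" by (simp add: Cor_def)
lemma C_r: "x \<in> C \<Longrightarrow> M x e = x" by (simp add: Cor_def)

lemma C_e: "e \<in> C" using e_galg e_idem e_fix by (simp add: Cor_def)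
lemma C_zero: "0 \<in> C" by (simp add: Cor_def galg_zero)
lemma C_add: "x \<in> C \<Longrightarrow> y \<in> C \<Longrightarrow> x + y \<in> C"
  by (simp add: Cor_def galg_add gconj_add M_add_l M_add_r)
lemma C_diff: "x \<in> C \<Longrightarrow> y \<in> C \<Longrightarrow> x - y \<in> C"
  by (simp add: Cor_def galg_diff gconj_diff M_diff_l M_diff_r)
lemma C_uminus: "x \<in> C \<Longrightarrow> - x \<in> C"
  by (simp add: Cor_def galg_uminus gconj_uminus M_uminus_l M_uminus_r)
lemma C_sm: "x \<in> C \<Longrightarrow> sm c x \<in> C"
  by (simp add: Cor_def galg_sm gconj_sm M_sm_l M_sm_r)
lemma C_M:
  assumes x: "x \<in> C" and y: "y \<in> C" shows "M x y \<in> C"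
proof -
  have "M e (M x y) = M x y" using x by (simp add: MA[symmetric] C_l)
  moreover have "M (M x y) e = M x y" using y by (simp add: MA C_r)
  moreover have "\<forall>h\<in>H. gconj G h (M x y) = M x y" using x y by (simp add: gconj_M Hcar C_fix)
  ultimately show ?thesis using M_galg by (simp add: Cor_def)
qed
lemma C_sum: "(\<And>k. k \<in> K \<Longrightarrow> f k \<in> C) \<Longrightarrow> (\<Sum>k\<in>K. f k) \<in> C"
  by (induction K rule: infinite_finite_induct) (auto simp: C_zero C_add)

lemma ring_R: "ring R"
proof (rule ringI)
  show "abelian_group R"
  proof (rule abelian_groupI)
    fix x assume x: "x \<in> carrier R"
    show "\<exists>y\<in>carrier R. y \<oplus>\<^bsub>R\<^esub> x = \<zero>\<^bsub>R\<^esub>"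
      by (rule bexI[where x="- x"]) (use x in \<open>simp_all add: C_uminus\<close>)
  qed (auto simp: C_add C_zero add.assoc add.commute)
  show "monoid R"
    by (rule monoidI) (auto simp: C_M C_e MA C_l C_r)
qed (auto simp: M_add_l M_add_r)

sublocale Rr: ring R by (rule ring_R)

lemma ainv: "x \<in> C \<Longrightarrow> \<ominus>\<^bsub>R\<^esub> x = - x"
  by (rule Rr.minus_equality) (auto simp: C_uminus)
lemma aminus: "x \<in> C \<Longrightarrow> y \<in> C \<Longrightarrow> x \<ominus>\<^bsub>R\<^esub> y = x - y"
  by (simp add: a_minus_def ainv)

lemma Units_iff: "x \<in> Units R \<longleftrightarrow> x \<in> C \<and> (\<exists>y\<in>C. M y x = e \<and> M x y = e)"
  by (simp add: Units_def)

lemma C_lim: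
  assumes z: "\<And>n. z n \<in> C" and c: "\<And>n. Dv \<pi> n (z (Suc n) - z n)"
  shows "\<exists>l\<in>C. \<forall>n. Dv \<pi> n (l - z n)"
proof -
  have "\<forall>g. \<exists>l. \<forall>n. \<pi>^n dvd (l - z n g)"
  proof
    fix g
    have "\<forall>n. \<pi>^n dvd (z (Suc n) g - z n g)" using c by (simp add: Dv_def)
    moreover from cpl have "(\<forall>n. \<pi>^n dvd ((\<lambda>n. z n g) (Suc n) - (\<lambda>n. z n g) n)) \<longrightarrow>
        (\<exists>l. \<forall>n. \<pi>^n dvd (l - (\<lambda>n. z n g) n))" unfolding pi_adically_complete_def by (rule spec)
    ultimately show "\<exists>l. \<forall>n. \<pi>^n dvd (l - z n g)" by simp
  qed
  then obtain L where L: "\<And>g n. \<pi>^n dvd (L g - z n g)" by metis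
  define l where "l = (\<lambda>g. if g \<in> carrier G then L g else 0)"
  have zg: "z n g = 0" if "g \<notin> carrier G" for n g using z[of n] that by (simp add: Cor_def galg_def)
  have D: "Dv \<pi> n (l - z n)" for n unfolding Dv_def l_def using L zg by auto
  have lg: "l \<in> galg G" by (simp add: l_def galg_def)
  have sep: "x = 0" if "\<And>n. Dv \<pi> n x" for x using Dv_sep[OF uni] that by blast
  have hfix: "gconj G h l = l" if h: "h \<in> H" for h
  proof -
    have "gconj G h l - l = 0"
    proof (rule sep)
      fix n
      have "gconj G h l - l = gconj G h (l - z n) - (l - z n)"
        using C_fix[OF z h] by (simp add: gconj_diff algebra_simps)
      then show "Dv \<pi> n (gconj G h l - l)" by (simp only:) (rule Dv_diff[OF Dv_gconj[OF D] D])
    qed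
    then show ?thesis by simp
  qed
  have ml: "M e l = l"
  proof -
    have "M e l - l = 0"
    proof (rule sep)
      fix n
      have "M e l - l = M e (l - z n) - (l - z n)"
        using C_l[OF z] by (simp add: M_diff_r algebra_simps)
      then show "Dv \<pi> n (M e l - l)" by (simp only:) (rule Dv_diff[OF Dv_M_r[OF D] D])
    qed
    then show ?thesis by simp
  qed
  have mr: "M l e = l"
  proof -
    have "M l e - l = 0"
    proof (rule sep)
      fix n
      have "M l e - l = M (l - z n) e - (l - z n)"
        using C_r[OF z] by (simp add: M_diff_l algebra_simps)
      then show "Dv \<pi> n (M l e - l)" by (simp only:) (rule Dv_diff[OF Dv_M_l[OF D] D])
    qed
    then show ?thesis by simp
  qed
  have "l \<in> C" using lg hfix ml mr by (simp add: Cor_def)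
  then show ?thesis using D by blast
qed

lemma mp_C: "d \<in> C \<Longrightarrow> mp G e d n \<in> C"
  by (induction n) (auto simp: C_e C_M)

lemma mp_comm: "d \<in> C \<Longrightarrow> x \<in> C \<Longrightarrow> M d x = M x d \<Longrightarrow> M (mp G e d n) x = M x (mp G e d n)"
proof (induction n)
  case 0 then show ?case by (simp add: C_l C_r)
next
  case (Suc n) then show ?case by (simp add: MA) (simp flip: MA)
qed

lemma mp_Dv: "d \<in> C \<Longrightarrow> Dv \<pi> 1 d \<Longrightarrow> Dv \<pi> n (mp G e d n)"
proof (induction n)
  case (Suc n) then show ?case using Dv_M_both[of \<pi> 1 d n "mp G e d n"] by simp
qed simp

lemma mp_add: "d \<in> C \<Longrightarrow> M (mp G e d a) (mp G e d b) = mp G e d (a + b)"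
  by (induction a) (auto simp: C_l mp_C MA)

lemma mp_mult: "x \<in> C \<Longrightarrow> y \<in> C \<Longrightarrow> M x y = M y x \<Longrightarrow> mp G e (M x y) n = M (mp G e x n) (mp G e y n)"
proof (induction n)
  case 0 then show ?case by (simp add: e_idem)
next
  case (Suc n)
  have c: "M y (mp G e x n) = M (mp G e x n) y" using mp_comm[of x y n] Suc.prems by simp
  have ih: "mp G e (M x y) n = M (mp G e x n) (mp G e y n)" using Suc.IH Suc.prems by blast
  have "mp G e (M x y) (Suc n) = M (M x y) (M (mp G e x n) (mp G e y n))"
    by (simp only: mp.simps ih)
  also have "\<dots> = M x (M y (M (mp G e x n) (mp G e y n)))" by (rule MA)
  also have "\<dots> = M x (M (mp G e x n) (M y (mp G e y n)))" by (simp flip: MA add: c)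
  finally show ?case by (simp add: MA)
qed

lemma unit_A:
  assumes d: "d \<in> C" and dv: "Dv \<pi> 1 d"
  shows "e + d \<in> Units R"
proof -
  define w where "w n = mp G e (- d) n" for n
  define zs where "zs n = (\<Sum>k<n. w k)" for n
  have md: "- d \<in> C" "Dv \<pi> 1 (- d)" using d dv by (auto simp: C_uminus Dv_uminus)
  have wC: "w n \<in> C" for n unfolding w_def using mp_C md by blast
  have wD: "Dv \<pi> n (w n)" for n unfolding w_def using mp_Dv md by blast
  have wc: "M (w n) d = M d (w n)" for n
  proof -
    have "M (w n) (- d) = M (- d) (w n)" unfolding w_def by (rule mp_comm) (use md in auto)
    then show ?thesis by (simp add: M_uminus_l M_uminus_r)
  qed
  have zC: "zs n \<in> C" for n unfolding zs_def by (rule C_sum) (rule wC)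
  have zstep: "zs (Suc n) - zs n = w n" for n unfolding zs_def by simp
  define E where "E = e + d"
  have EC: "E \<in> C" unfolding E_def using d by (simp add: C_add C_e)
  have Ew: "M E (w n) = w n + M d (w n)" for n unfolding E_def using wC by (simp add: M_add_l C_l)
  have wE: "M (w n) E = w n + M d (w n)" for n unfolding E_def using wC wc by (simp add: M_add_r C_r)
  have wS: "w (Suc n) = - M d (w n)" for n unfolding w_def by (simp add: M_uminus_l)
  have rl: "M E (zs n) = e - w n" for n
  proof (induction n)
    case 0 then show ?case by (simp add: zs_def w_def)
  next
    case (Suc n)
    have "M E (zs (Suc n)) = M E (zs n) + M E (w n)"
      unfolding zs_def by (simp add: M_add_r)
    also have "\<dots> = e - w n + (w n + M d (w n))" by (simp only: Suc.IH Ew)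
    also have "\<dots> = e - w (Suc n)" by (simp add: wS)
    finally show ?case .
  qed
  have rr: "M (zs n) E = e - w n" for n
  proof (induction n)
    case 0 then show ?case by (simp add: zs_def w_def)
  next
    case (Suc n)
    have "M (zs (Suc n)) E = M (zs n) E + M (w n) E"
      unfolding zs_def by (simp add: M_add_l)
    also have "\<dots> = e - w n + (w n + M d (w n))" by (simp only: Suc.IH wE)
    also have "\<dots> = e - w (Suc n)" by (simp add: wS)
    finally show ?case .
  qed
  obtain L where L: "L \<in> C" "\<And>n. Dv \<pi> n (L - zs n)"
    using C_lim[of zs] zC zstep wD by metis
  have sep: "x = 0" if "\<And>n. Dv \<pi> n x" for x using Dv_sep[OF uni] that by blast
  have "M E L - e = 0"
  proof (rule sep)
    fix n
    have "M E L - e = M E (L - zs n) - w n" using rl[of n] by (simp add: M_diff_r)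
    then show "Dv \<pi> n (M E L - e)" by (simp only:) (rule Dv_diff[OF Dv_M_r[OF L(2)] wD])
  qed
  moreover have "M L E - e = 0"
  proof (rule sep)
    fix n
    have "M L E - e = M (L - zs n) E - w n" using rr[of n] by (simp add: M_diff_l)
    then show "Dv \<pi> n (M L E - e)" by (simp only:) (rule Dv_diff[OF Dv_M_l[OF L(2)] wD])
  qed
  ultimately show ?thesis unfolding Units_iff using L(1) EC unfolding E_def by auto
qed

lemma unit_modpi:
  assumes s: "s \<in> C" and t: "t \<in> C" and d1: "Dv \<pi> 1 (M s t - e)" and d2: "Dv \<pi> 1 (M t s - e)"
  shows "s \<in> Units R"
proof -
  have "e + (M s t - e) \<in> Units R" by (rule unit_A) (use s t d1 in \<open>auto simp: C_diff C_M C_e\<close>)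
  then obtain i1 where i1: "i1 \<in> C" "M (M s t) i1 = e" by (auto simp: Units_iff)
  have "e + (M t s - e) \<in> Units R" by (rule unit_A) (use s t d2 in \<open>auto simp: C_diff C_M C_e\<close>)
  then obtain i2 where i2: "i2 \<in> C" "M i2 (M t s) = e" by (auto simp: Units_iff)
  show ?thesis
    by (rule Rr.units_lr[where l="M i2 t" and r="M t i1"]) (use s t i1 i2 in \<open>auto simp: C_M MA\<close>)
qed

lemma (in ring) idem_iter:
  assumes y: "y \<in> carrier R"
  shows "(y \<otimes> y \<oplus> y \<otimes> y \<oplus> y \<otimes> y \<ominus> y \<otimes> (y \<otimes> y) \<ominus> y \<otimes> (y \<otimes> y)) \<ominus> y
           = (y \<otimes> y \<ominus> y) \<otimes> (\<one> \<ominus> y \<ominus> y)"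
    and "(y \<otimes> y \<oplus> y \<otimes> y \<oplus> y \<otimes> y \<ominus> y \<otimes> (y \<otimes> y) \<ominus> y \<otimes> (y \<otimes> y)) \<otimes>
         (y \<otimes> y \<oplus> y \<otimes> y \<oplus> y \<otimes> y \<ominus> y \<otimes> (y \<otimes> y) \<ominus> y \<otimes> (y \<otimes> y))
         \<ominus> (y \<otimes> y \<oplus> y \<otimes> y \<oplus> y \<otimes> y \<ominus> y \<otimes> (y \<otimes> y) \<ominus> y \<otimes> (y \<otimes> y))
           = ((y \<otimes> y \<ominus> y) \<otimes> (y \<otimes> y \<ominus> y)) \<otimes>
             ((y \<otimes> y \<ominus> y) \<oplus> (y \<otimes> y \<ominus> y) \<oplus> (y \<otimes> y \<ominus> y) \<oplus> (y \<otimes> y \<ominus> y) \<ominus> \<one> \<ominus> \<one> \<ominus> \<one>)"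
  using y by (simp add: rsimps; algebra?)+

lemma lift_idem:
  assumes x: "x \<in> C" and dx: "Dv \<pi> 1 (M x x - x)"
  shows "\<exists>f\<in>C. M f f = f \<and> Dv \<pi> 1 (f - x)"
proof -
  define \<phi> :: "('a \<Rightarrow> 'o) \<Rightarrow> ('a \<Rightarrow> 'o)" where "\<phi> y = M y y + M y y + M y y - M y (M y y) - M y (M y y)" for y
  define p :: "('a \<Rightarrow> 'o) \<Rightarrow> ('a \<Rightarrow> 'o)" where "p y = M y y - y" for y
  have \<phi>C: "\<phi> y \<in> C" if "y \<in> C" for y unfolding \<phi>_def using that by (intro C_add C_diff C_M)
  have pC: "p y \<in> C" if "y \<in> C" for y unfolding p_def using that by (intro C_diff C_M)
  have I1: "\<phi> y - y = M (p y) (e - y - y)" if y: "y \<in> C" for y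
    using Rr.idem_iter(1)[of y] y unfolding \<phi>_def p_def by (simp only: RR_simps aminus C_add C_diff C_M C_e simp_thms)
  have I2: "M (\<phi> y) (\<phi> y) - \<phi> y = M (M (p y) (p y)) (p y + p y + p y + p y - e - e - e)" if y: "y \<in> C" for y
    using Rr.idem_iter(2)[of y] y unfolding \<phi>_def p_def by (simp only: RR_simps aminus C_add C_diff C_M C_e simp_thms)
  define it where "it n = (\<phi> ^^ n) x" for n
  have itS: "it (Suc n) = \<phi> (it n)" for n by (simp add: it_def)
  have itC: "it n \<in> C" for n by (induction n) (auto simp: it_def x \<phi>C)
  have pD: "Dv \<pi> (Suc n) (p (it n))" for n
  proof (induction n)
    case 0 then show ?case using dx by (simp add: it_def p_def fun_diff_def)
  next
    case (Suc n)
    have eq: "p (it (Suc n)) = M (M (p (it n)) (p (it n))) (p (it n) + p (it n) + p (it n) + p (it n) - e - e - e)"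
      unfolding itS using I2[OF itC] by (simp add: p_def)
    have D2: "Dv \<pi> (Suc (Suc n)) (M (p (it n)) (p (it n)))"
      by (rule Dv_mono[OF _ Dv_M_both[OF Suc.IH Suc.IH]]) simp
    show ?case unfolding eq by (rule Dv_M_l[OF D2])
  qed
  have sD: "Dv \<pi> (Suc n) (it (Suc n) - it n)" for n
    using I1[OF itC[of n]] pD[of n] by (simp add: itS Dv_M_l)
  obtain f where f: "f \<in> C" "\<And>n. Dv \<pi> n (f - it n)"
    using C_lim[of it] itC sD Dv_mono[OF le_SucI[OF le_refl]] by metis
  have sep: "y = 0" if "\<And>n. Dv \<pi> n y" for y using Dv_sep[OF uni] that by blast
  have "M f f - f = 0"
  proof (rule sep)
    fix n
    have "M f f - f = M f (f - it n) + M (f - it n) (it n) - (f - it n) + p (it n)"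
      by (simp add: p_def M_diff_l M_diff_r algebra_simps)
    then show "Dv \<pi> n (M f f - f)"
      by (simp only:) (rule Dv_add[OF Dv_diff[OF Dv_add[OF Dv_M_r[OF f(2)] Dv_M_l[OF f(2)]] f(2)] Dv_mono[OF le_SucI[OF le_refl] pD[of n]]])
  qed
  moreover have "Dv \<pi> 1 (f - x)"
  proof -
    have "f - x = (f - it 1) + (it (Suc 0) - it 0)" by (simp add: it_def)
    then show ?thesis using f(2)[of 1] sD[of 0] by (simp only:) (rule Dv_add[OF f(2)[of 1]], simp)
  qed
  ultimately show ?thesis using f(1) by auto
qed

end


lemma lin_dep:
  fixes v :: "'k \<Rightarrow> 'g \<Rightarrow> 'o::idom"
  assumes "finite I" "finite K" "card I < card K"
  shows "\<exists>c. (\<exists>k\<in>K. c k \<noteq> 0) \<and> (\<forall>g\<in>I. (\<Sum>k\<in>K. c k * v k g) = 0)"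
  using assms
proof (induction I arbitrary: K v rule: finite_induct)
  case empty
  then obtain k where "k \<in> K" by (metis card.empty card_gt_0_iff ex_in_conv)
  then show ?case by (intro exI[where x="\<lambda>_. 1"]) auto
next
  case (insert i I)
  show ?case
  proof (cases "\<forall>k\<in>K. v k i = 0")
    case True
    have "card I < card K" using insert by simp
    then obtain c where c: "\<exists>k\<in>K. c k \<noteq> 0" "\<forall>g\<in>I. (\<Sum>k\<in>K. c k * v k g) = 0"
      using insert.IH[OF insert.prems(1)] by blast
    then show ?thesis using True by (intro exI[where x=c]) auto
  next
    case False
    then obtain p where p: "p \<in> K" "v p i \<noteq> 0" by blast
    define K' where "K' = K - {p}"
    define w where "w k g = v p i * v k g - v k i * v p g" for k g
    have fK': "finite K'" using insert by (simp add: K'_def)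
    have "card K' = card K - 1" using p insert by (simp add: K'_def)
    then have cK': "card I < card K'" using insert by simp
    obtain c' where c': "\<exists>k\<in>K'. c' k \<noteq> 0" "\<forall>g\<in>I. (\<Sum>k\<in>K'. c' k * w k g) = 0"
      using insert.IH[OF fK' cK', of w] by blast
    define c where "c k = (if k = p then - (\<Sum>k\<in>K'. c' k * v k i) else c' k * v p i)" for k
    have key: "(\<Sum>k\<in>K. c k * v k g) = (\<Sum>k\<in>K'. c' k * w k g)" for g
    proof -
      have "(\<Sum>k\<in>K. c k * v k g) = c p * v p g + (\<Sum>k\<in>K'. c k * v k g)"
        unfolding K'_def using p insert.prems(1) by (simp add: sum.remove)
      also have "(\<Sum>k\<in>K'. c k * v k g) = (\<Sum>k\<in>K'. c' k * v p i * v k g)"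
        by (rule sum.cong) (auto simp: c_def K'_def)
      also have "c p * v p g = - (\<Sum>k\<in>K'. c' k * v k i * v p g)"
        by (simp add: c_def sum_distrib_right)
      finally show ?thesis
        by (simp add: w_def sum_subtractf[symmetric] algebra_simps)
    qed
    have nz: "\<exists>k\<in>K. c k \<noteq> 0"
    proof -
      obtain k where k: "k \<in> K'" "c' k \<noteq> 0" using c' by blast
      then have "k \<in> K" "k \<noteq> p" by (auto simp: K'_def)
      then show ?thesis using k p by (intro bexI[where x=k]) (auto simp: c_def)
    qed
    have "\<forall>g\<in>insert i I. (\<Sum>k\<in>K. c k * v k g) = 0"
    proof
      fix g assume "g \<in> insert i I"
      then show "(\<Sum>k\<in>K. c k * v k g) = 0"
      proof
        assume "g = i" then show ?thesis unfolding key by (simp add: w_def)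
      next
        assume "g \<in> I" then show ?thesis unfolding key using c' by blast
      qed
    qed
    then show ?thesis using nz by blast
  qed
qed

lemma normalize_rel:
  fixes v :: "'k \<Rightarrow> 'g \<Rightarrow> 'o::idom"
  assumes u: "dvr_uniformizer \<pi>" and K: "finite K" and nz: "\<exists>k\<in>K. c k \<noteq> 0"
    and rel: "\<forall>g. (\<Sum>k\<in>K. c k * v k g) = 0"
  shows "\<exists>c'. (\<exists>k\<in>K. \<not> \<pi> dvd c' k) \<and> (\<forall>g. (\<Sum>k\<in>K. c' k * v k g) = 0)"
proof -
  obtain k0 where k0: "k0 \<in> K" "c k0 \<noteq> 0" using nz by blast
  then obtain a j where a: "a dvd 1" "c k0 = a * \<pi>^j" using u unfolding dvr_uniformizer_def by blast
  have pz: "\<pi> \<noteq> 0" using u unfolding dvr_uniformizer_def by simp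
  have "\<forall>c. c k0 = a * \<pi>^j \<longrightarrow> (\<forall>g. (\<Sum>k\<in>K. c k * v k g) = 0) \<longrightarrow>
          (\<exists>c'. (\<exists>k\<in>K. \<not> \<pi> dvd c' k) \<and> (\<forall>g. (\<Sum>k\<in>K. c' k * v k g) = 0))"
  proof (induction j)
    case 0
    show ?case
    proof (intro allI impI)
      fix c assume c0: "c k0 = a * \<pi>^0" and r: "\<forall>g. (\<Sum>k\<in>K. c k * v k g) = 0"
      have "\<not> \<pi> dvd c k0" using c0 unit_nondvd[OF u a(1)] by simp
      then show "\<exists>c'. (\<exists>k\<in>K. \<not> \<pi> dvd c' k) \<and> (\<forall>g. (\<Sum>k\<in>K. c' k * v k g) = 0)"
        using r k0(1) by blast
    qed
  next
    case (Suc j)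
    show ?case
    proof (intro allI impI)
      fix c assume c0: "c k0 = a * \<pi>^Suc j" and r: "\<forall>g. (\<Sum>k\<in>K. c k * v k g) = 0"
      show "\<exists>c'. (\<exists>k\<in>K. \<not> \<pi> dvd c' k) \<and> (\<forall>g. (\<Sum>k\<in>K. c' k * v k g) = 0)"
      proof (cases "\<exists>k\<in>K. \<not> \<pi> dvd c k")
        case True then show ?thesis using r by blast
      next
        case False
        define c' where "c' k = (SOME y. c k = \<pi> * y)" for k
        have cc: "c k = \<pi> * c' k" if "k \<in> K" for k
          using False that unfolding c'_def by (metis (mono_tags, lifting) dvdE someI_ex)
        have r': "\<forall>g. (\<Sum>k\<in>K. c' k * v k g) = 0"
        proof
          fix g
          have "\<pi> * (\<Sum>k\<in>K. c' k * v k g) = (\<Sum>k\<in>K. c k * v k g)"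
            by (simp add: sum_distrib_left cc mult.assoc)
          then show "(\<Sum>k\<in>K. c' k * v k g) = 0" using r pz by simp
        qed
        have "\<pi> * c' k0 = c k0" using cc[OF k0(1)] by simp
        also have "\<dots> = \<pi> * (a * \<pi>^j)" using c0 by (simp add: ac_simps)
        finally have "\<pi> * c' k0 = \<pi> * (a * \<pi>^j)" .
        then have "c' k0 = a * \<pi>^j" using pz by simp
        then show ?thesis using Suc.IH r' by blast
      qed
    qed
  qed
  then show ?thesis using a rel by blast
qed

context cor begin

lemma C_out: "x \<in> C \<Longrightarrow> g \<notin> carrier G \<Longrightarrow> x g = 0"
  by (simp add: Cor_def galg_def)

lemma pow_rel:
  assumes s: "s \<in> C"
  shows "\<exists>a\<ge>1. \<exists>u. u dvd 1 \<and> (\<exists>h\<in>C. M h s = M s h \<and> Dv \<pi> 1 (M (mp G e s a) (sm u e + M s h)))"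
proof -
  define n where "n = card (carrier G)"
  define v where "v k = mp G e s k" for k
  have vC: "v k \<in> C" for k unfolding v_def using mp_C s by blast
  obtain c where c: "\<exists>k\<in>{..n}. c k \<noteq> 0" "\<forall>g\<in>carrier G. (\<Sum>k\<in>{..n}. c k * v k g) = 0"
    using lin_dep[OF fin, of "{..n}" v] by (auto simp: n_def)
  have "\<forall>g. (\<Sum>k\<in>{..n}. c k * v k g) = 0"
    using c(2) C_out[OF vC] by (metis (no_types, lifting) mult_zero_right sum.neutral)
  then obtain d where d: "\<exists>k\<in>{..n}. \<not> \<pi> dvd d k" "\<forall>g. (\<Sum>k\<in>{..n}. d k * v k g) = 0"
    using normalize_rel[OF uni _ c(1)] by blast
  define a0 where "a0 = (LEAST k. k \<le> n \<and> \<not> \<pi> dvd d k)"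
  have a0: "a0 \<le> n" "\<not> \<pi> dvd d a0"
    using LeastI_ex[of "\<lambda>k. k \<le> n \<and> \<not> \<pi> dvd d k"] d(1) unfolding a0_def by auto
  have below: "\<pi> dvd d k" if "k < a0" for k
    using not_less_Least[of k "\<lambda>k. k \<le> n \<and> \<not> \<pi> dvd d k"] that a0(1) unfolding a0_def by auto
  define u where "u = d a0"
  have uu: "u dvd 1" unfolding u_def by (rule nondvd_unit[OF uni a0(2)])
  define h where "h = (\<Sum>k\<in>{Suc a0..n}. sm (d k) (v (k - Suc a0)))"
  have hC: "h \<in> C" unfolding h_def by (rule C_sum) (simp add: C_sm vC)
  have vs: "M (v k) s = M s (v k)" for k unfolding v_def by (rule mp_comm) (use s in auto)
  have hs: "M h s = M s h"
    unfolding h_def by (simp add: M_sum_l M_sum_r M_sm_l M_sm_r vs)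
  have vadd: "M (v a) (v b) = v (a + b)" for a b unfolding v_def by (rule mp_add[OF s])
  have split: "(\<Sum>k\<in>{..n}. sm (d k) (v k)) = (\<Sum>k\<in>{..<a0}. sm (d k) (v k)) + (\<Sum>k\<in>{a0..n}. sm (d k) (v k))"
  proof -
    have "{..n} = {..<a0} \<union> {a0..n}" using a0(1) by auto
    then show ?thesis by (simp add: sum.union_disjoint ivl_disj_int)
  qed
  have tot: "(\<Sum>k\<in>{..n}. sm (d k) (v k)) = 0"
    using d(2) by (simp add: fun_eq_iff fsum_apply)
  have low: "Dv \<pi> 1 (\<Sum>k\<in>{..<a0}. sm (d k) (v k))"
    unfolding Dv_def fsum_apply using below by (auto intro!: dvd_sum)
  have hi: "(\<Sum>k\<in>{a0..n}. sm (d k) (v k)) = M (v a0) (sm u e + M s h)"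
  proof -
    have "M (v a0) (sm u e + M s h) = sm u (v a0) + M (v a0) (M s h)"
      by (simp add: M_add_r M_sm_r C_r[OF vC])
    also have "M (v a0) (M s h) = (\<Sum>k\<in>{Suc a0..n}. sm (d k) (v k))"
    proof -
      have "M (v a0) (M s h) = (\<Sum>k\<in>{Suc a0..n}. sm (d k) (M (v a0) (M s (v (k - Suc a0)))))"
        unfolding h_def by (simp add: M_sum_r M_sm_r)
      also have "\<dots> = (\<Sum>k\<in>{Suc a0..n}. sm (d k) (v k))"
      proof (rule sum.cong[OF refl])
        fix k assume k: "k \<in> {Suc a0..n}"
        have "M s (v (k - Suc a0)) = v (Suc (k - Suc a0))" by (simp add: v_def)
        then have "M (v a0) (M s (v (k - Suc a0))) = v (a0 + Suc (k - Suc a0))" by (simp add: vadd)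
        also have "a0 + Suc (k - Suc a0) = k" using k by auto
        finally show "sm (d k) (M (v a0) (M s (v (k - Suc a0)))) = sm (d k) (v k)" by simp
      qed
      finally show ?thesis .
    qed
    also have "sm u (v a0) + (\<Sum>k\<in>{Suc a0..n}. sm (d k) (v k)) = (\<Sum>k\<in>{a0..n}. sm (d k) (v k))"
    proof -
      have "{a0..n} = insert a0 {Suc a0..n}" using a0(1) by auto
      then show ?thesis by (simp add: u_def)
    qed
    finally show ?thesis by (rule sym)
  qed
  have D0: "Dv \<pi> 1 (M (v a0) (sm u e + M s h))"
  proof -
    have "M (v a0) (sm u e + M s h) = - (\<Sum>k\<in>{..<a0}. sm (d k) (v k))"
      using tot split hi by (simp add: add_eq_0_iff)
    then show ?thesis using low by (simp add: Dv_uminus)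
  qed
  have D1: "Dv \<pi> 1 (M (mp G e s (Suc a0)) (sm u e + M s h))"
    using Dv_M_r[OF D0, of s] by (simp add: v_def MA)
  show ?thesis
    by (rule exI[where x="Suc a0"]) (use uu hC hs D1 in auto)
qed

end


context cor begin

lemma geo:
  assumes s: "s \<in> C"
  shows "M (e - s) (\<Sum>k<n. mp G e s k) = e - mp G e s n"
    and "M (\<Sum>k<n. mp G e s k) (e - s) = e - mp G e s n"
proof -
  have sc: "M (mp G e s k) s = M s (mp G e s k)" for k by (rule mp_comm) (use s in auto)
  show "M (e - s) (\<Sum>k<n. mp G e s k) = e - mp G e s n"
  proof (induction n)
    case (Suc n)
    have "M (e - s) (\<Sum>k<Suc n. mp G e s k) = M (e - s) (\<Sum>k<n. mp G e s k) + M (e - s) (mp G e s n)"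
      by (simp add: M_add_r)
    also have "\<dots> = (e - mp G e s n) + (mp G e s n - mp G e s (Suc n))"
      by (simp only: Suc.IH) (simp add: M_diff_l C_l mp_C s fun_eq_iff)
    also have "\<dots> = e - mp G e s (Suc n)" by simp
    finally show ?case .
  qed simp
  show "M (\<Sum>k<n. mp G e s k) (e - s) = e - mp G e s n"
  proof (induction n)
    case (Suc n)
    have "M (\<Sum>k<Suc n. mp G e s k) (e - s) = M (\<Sum>k<n. mp G e s k) (e - s) + M (mp G e s n) (e - s)"
      by (simp add: M_add_l)
    also have "\<dots> = (e - mp G e s n) + (mp G e s n - mp G e s (Suc n))"
      by (simp only: Suc.IH) (simp add: M_diff_r C_r mp_C s sc fun_eq_iff)
    also have "\<dots> = e - mp G e s (Suc n)" by simp
    finally show ?case .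
  qed simp
qed

lemma local_ring:
  assumes triv: "\<forall>f\<in>C. M f f = f \<longrightarrow> f = 0 \<or> f = e" and s: "s \<in> C"
  shows "s \<in> Units R \<or> e - s \<in> Units R"
proof -
  obtain a u h where a: "a \<ge> 1" and uu: "u dvd 1" and hC: "h \<in> C" and hs: "M h s = M s h"
    and D: "Dv \<pi> 1 (M (mp G e s a) (sm u e + M s h))"
    using pow_rel[OF s] by blast
  obtain v where uv: "u * v = 1" using uu by (metis dvdE)
  define S where "S k = mp G e s k" for k
  have SC: "S k \<in> C" for k unfolding S_def using mp_C s by blast
  define h' where "h' = sm v h"
  define t where "t = M s h'"
  have h'C: "h' \<in> C" unfolding h'_def using hC by (rule C_sm)
  have tC: "t \<in> C" unfolding t_def using s h'C by (rule C_M)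
  have h's: "M h' s = M s h'" unfolding h'_def by (simp add: M_sm_l M_sm_r hs)
  have ts: "M t s = M s t" unfolding t_def by (simp add: MA h's)
  have z: "sm u e + M s h = sm u (e + t)"
    by (rule ext) (simp add: t_def h'_def M_sm_r distrib_left mult.assoc[symmetric] uv)
  have D2: "Dv \<pi> 1 (M (S a) (e + t))"
  proof -
    have "M (S a) (e + t) = sm v (M (mp G e s a) (sm u e + M s h))"
      unfolding z M_sm_r S_def
      by (rule ext) (simp add: mult.assoc[symmetric] mult.commute[of v u] uv)
    then show ?thesis using D by (simp add: Dv_sm)
  qed
  define nt where "nt = - h'"
  have ntC: "nt \<in> C" unfolding nt_def using h'C by (rule C_uminus)
  have nts: "M nt s = M s nt" unfolding nt_def by (simp add: M_uminus_l M_uminus_r h's)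
  define m where "m = mp G e nt a"
  have mC: "m \<in> C" unfolding m_def using mp_C ntC by blast
  have ms: "M m s = M s m" unfolding m_def by (rule mp_comm) (use ntC s nts in auto)
  have mS: "M m (S a) = M (S a) m"
    unfolding S_def using mp_comm[OF s mC ms[symmetric], of a] by simp
  define wt where "wt j = ((\<lambda>w. e - M t w) ^^ j) e" for j
  have wtS: "wt (Suc j) = e - M t (wt j)" for j by (simp add: wt_def)
  have wtC: "wt j \<in> C" for j
  proof (induction j)
    case 0 then show ?case by (simp add: wt_def C_e)
  next
    case (Suc j) then show ?case unfolding wtS by (rule C_diff[OF C_e C_M[OF tC]])
  qed
  have tt: "M (e + t) (M t w) = M t (M (e + t) w)" for w
  proof -
    have "M (e + t) t = M t (e + t)" by (simp add: M_add_l M_add_r C_l C_r tC)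
    then show ?thesis by (metis MA)
  qed
  have Et: "M (e + t) e = e + t" using tC by (simp add: M_add_l C_r C_e)
  have WT: "M (e + t) (wt j) = e - mp G e (- t) (Suc j)" for j
  proof (induction j)
    case 0
    note a = Et
    have b: "mp G e (- t) (Suc 0) = - t" using tC by (simp add: C_r C_uminus)
    show ?case by (simp only: wt_def funpow_0 a b) (simp add: fun_eq_iff)
  next
    case (Suc j)
    have "M (e + t) (wt (Suc j)) = M (e + t) (e - M t (wt j))" by (simp only: wtS)
    also have "\<dots> = (e + t) - M t (M (e + t) (wt j))"
      by (simp only: M_diff_r tt Et)
    also have "\<dots> = e - mp G e (- t) (Suc (Suc j))"
    proof -
      have X: "M t (e - mp G e (-t) (Suc j)) = t - M t (mp G e (-t) (Suc j))"
        by (simp only: M_diff_r C_r[OF tC])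
      have Y: "mp G e (- t) (Suc (Suc j)) = - M t (mp G e (- t) (Suc j))"
        by (simp only: mp.simps(2)[of G e "- t" "Suc j"] M_uminus_l)
      show ?thesis by (simp only: Suc X Y) (simp add: fun_eq_iff)
    qed
    finally show ?case .
  qed
  have mt: "- t = M s nt" unfolding t_def nt_def by (simp add: M_uminus_r)
  have pw: "mp G e (- t) a = M (S a) m"
    unfolding mt S_def m_def by (rule mp_mult) (use s ntC nts in auto)
  obtain j where j: "a = Suc j" using a by (metis Suc_pred' less_le_trans zero_less_one)
  have K1: "Dv \<pi> 1 (S a - M (M (S a) (S a)) m)"
  proof -
    have "S a - M (M (S a) (S a)) m = M (S a) (e - M (S a) m)"
      by (simp add: M_diff_r C_r SC MA)
    also have "\<dots> = M (S a) (M (e + t) (wt j))" using WT[of j] pw j by simp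
    also have "\<dots> = M (M (S a) (e + t)) (wt j)" by (simp add: MA)
    finally show ?thesis using D2 by (simp add: Dv_M_l)
  qed
  define E where "E = M (S a) m"
  have EC: "E \<in> C" unfolding E_def using SC mC by (rule C_M)
  have EE: "M E E = M (M (M (S a) (S a)) m) m"
  proof -
    have "M E E = M (S a) (M (M m (S a)) m)" unfolding E_def by (simp add: MA)
    also have "\<dots> = M (S a) (M (M (S a) m) m)" by (simp add: mS)
    finally show ?thesis by (simp add: MA)
  qed
  have DE: "Dv \<pi> 1 (M E E - E)"
  proof -
    have "M E E - E = M (M (M (S a) (S a)) m - S a) m" unfolding EE by (simp add: M_diff_l E_def)
    then show ?thesis using Dv_M_l[OF Dv_minus_comm[OF K1]] by simp
  qed
  obtain f where f: "f \<in> C" "M f f = f" "Dv \<pi> 1 (f - E)" using lift_idem[OF EC DE] by blast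
  have "f = 0 \<or> f = e" using triv f by blast
  then show ?thesis
  proof
    assume f0: "f = 0"
    have DE1: "Dv \<pi> 1 E" using f(3) f0 Dv_uminus[of \<pi> 1 "0 - E"] by simp
    have DSa: "Dv \<pi> 1 (S a)"
    proof -
      have "S a = (S a - M (M (S a) (S a)) m) + M (S a) E" unfolding E_def by (simp add: MA)
      then show ?thesis using K1 Dv_M_r[OF DE1] by (metis Dv_add)
    qed
    have "e - s \<in> Units R"
    proof (rule unit_modpi[where t="\<Sum>k<a. mp G e s k"])
      show "e - s \<in> C" using s by (simp add: C_diff C_e)
      show "(\<Sum>k<a. mp G e s k) \<in> C" by (rule C_sum) (use mp_C s in blast)
      show "Dv \<pi> 1 (M (e - s) (\<Sum>k<a. mp G e s k) - e)"
        using geo(1)[OF s, of a] DSa by (simp add: S_def Dv_uminus)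
      show "Dv \<pi> 1 (M (\<Sum>k<a. mp G e s k) (e - s) - e)"
        using geo(2)[OF s, of a] DSa by (simp add: S_def Dv_uminus)
    qed
    then show ?thesis by blast
  next
    assume fe: "f = e"
    have DE2: "Dv \<pi> 1 (E - e)" using f(3) fe by (simp add: Dv_minus_comm)
    define t' where "t' = M (S j) m"
    have t'C: "t' \<in> C" unfolding t'_def using SC mC by (rule C_M)
    have Ssj: "S a = M s (S j)" using j by (simp add: S_def)
    have sj: "M (S j) s = M s (S j)" unfolding S_def by (rule mp_comm) (use s in auto)
    have st: "M s t' = E" unfolding t'_def E_def Ssj by (simp add: MA)
    have ts': "M t' s = E"
    proof -
      have "M t' s = M (S j) (M s m)" unfolding t'_def by (simp add: MA ms)
      also have "\<dots> = M (M s (S j)) m" by (simp add: sj flip: MA)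
      finally show ?thesis unfolding E_def Ssj .
    qed
    have "s \<in> Units R"
      by (rule unit_modpi[OF s t'C]) (simp_all only: st ts' DE2)
    then show ?thesis by blast
  qed
qed

end


context group begin

lemma orth_card:
  fixes F :: "('a \<Rightarrow> 'c::idom) set"
  assumes fin: "finite (carrier G)" and F: "finite F"
    and mem: "\<forall>f\<in>F. f \<in> galg G \<and> galg_mult G f f = f \<and> f \<noteq> 0"
    and orth: "\<forall>f\<in>F. \<forall>g\<in>F. f \<noteq> g \<longrightarrow> galg_mult G f g = 0"
  shows "card F \<le> card (carrier G)"
proof (rule ccontr)
  assume "\<not> card F \<le> card (carrier G)"
  then have lt: "card (carrier G) < card F" by simp
  obtain c where c: "\<exists>k\<in>F. c k \<noteq> 0" "\<forall>g\<in>carrier G. (\<Sum>k\<in>F. c k * k g) = 0"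
    using lin_dep[OF fin F lt, of "\<lambda>k. k"] by blast
  obtain f0 where f0: "f0 \<in> F" "c f0 \<noteq> 0" using c(1) by blast
  have out: "k g = 0" if "k \<in> F" "g \<notin> carrier G" for k g using mem that by (auto simp: galg_def)
  define Xs where "Xs = (\<Sum>k\<in>F. sm (c k) k)"
  have X0: "Xs = 0"
  proof
    fix g show "Xs g = 0 g"
      using c(2) out by (cases "g \<in> carrier G") (auto simp: Xs_def fsum_apply intro!: sum.neutral)
  qed
  have "galg_mult G Xs f0 = (\<Sum>k\<in>F. sm (c k) (galg_mult G k f0))"
    by (simp add: Xs_def M_sum_l M_sm_l)
  also have "\<dots> = (\<Sum>k\<in>{f0}. sm (c k) (galg_mult G k f0))"
    by (rule sum.mono_neutral_right) (use F f0 orth in \<open>auto simp: sm_def fun_eq_iff\<close>)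
  also have "\<dots> = sm (c f0) (galg_mult G f0 f0)" by simp
  also have "\<dots> = sm (c f0) f0" using mem f0 by simp
  finally have "sm (c f0) f0 = 0" using X0 by simp
  then have "f0 = 0" using f0(2) by (auto simp: fun_eq_iff)
  then show False using mem f0 by blast
qed

end

lemma (in cor) cor_sub:
  assumes i: "i \<in> C" and ii: "M i i = i"
  shows "cor G H i \<pi>" and "Cor G H i \<subseteq> C"
proof -
  show "cor G H i \<pi>"
    unfolding cor_def cor_axioms_def using group_axioms fin Hsub i ii uni cpl by (auto simp: Cor_def)
  show "Cor G H i \<subseteq> C"
  proof
    fix x assume x: "x \<in> Cor G H i"
    have "M e x = x"
    proof -
      have "M e x = M e (M i x)" using x by (simp add: Cor_def)
      also have "\<dots> = M i x" using i by (simp add: C_l flip: MA)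
      finally show ?thesis using x by (simp add: Cor_def)
    qed
    moreover have "M x e = x"
    proof -
      have "M x e = M (M x i) e" using x by (simp add: Cor_def)
      also have "\<dots> = M x i" using i by (simp add: C_r MA)
      finally show ?thesis using x by (simp add: Cor_def)
    qed
    ultimately show "x \<in> C" using x by (simp add: Cor_def)
  qed
qed

context cor begin

lemma conj_prim:
  assumes p: "prim_idem G C i0" and u: "u \<in> C" and v: "v \<in> C" and uv: "M u v = e" and vu: "M v u = e"
  shows "prim_idem G C (M (M u i0) v)"
proof -
  have i0: "i0 \<in> C" "M i0 i0 = i0" "i0 \<noteq> (\<lambda>_. 0)" using p by (auto simp: prim_idem_def galg_idem_def)
  define i where "i = M (M u i0) v"
  have iC: "i \<in> C" unfolding i_def using u v i0 by (simp add: C_M)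
  have ii: "M i i = i"
  proof -
    have q: "M i0 (M i0 v) = M i0 v" using i0 by (simp flip: MA)
    have "M i i = M u (M i0 (M (M v u) (M i0 v)))" unfolding i_def by (simp add: MA)
    also have "\<dots> = M u (M i0 (M i0 v))" using vu i0 v by (simp add: C_l C_M)
    also have "\<dots> = M u (M i0 v)" by (simp only: q)
    finally show ?thesis by (simp add: i_def MA)
  qed
  have invx: "M (M u (M (M v x) u)) v = x" if x: "x \<in> C" for x
  proof -
    have "M (M u (M (M v x) u)) v = M (M u v) (M x (M u v))" by (simp add: MA)
    then show ?thesis using uv x by (simp add: C_l C_r)
  qed
  have i0b: "i0 = M (M v i) u"
  proof -
    have "M (M v i) u = M (M v u) (M i0 (M v u))" unfolding i_def by (simp add: MA)
    then show ?thesis using vu i0 by (simp add: C_l C_r)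
  qed
  have nz: "i \<noteq> (\<lambda>_. 0)"
  proof
    assume "i = (\<lambda>_. 0)"
    then have "i0 = 0" using i0b by simp
    then show False using i0(3) by (simp add: zero_fun_def)
  qed
  have nosplit: "\<not> (\<exists>e1\<in>C. \<exists>e2\<in>C. galg_idem G e1 \<and> galg_idem G e2 \<and> e1 \<noteq> (\<lambda>_. 0) \<and> e2 \<noteq> (\<lambda>_. 0) \<and>
          M e1 e2 = (\<lambda>_. 0) \<and> M e2 e1 = (\<lambda>_. 0) \<and> i = (\<lambda>g. e1 g + e2 g))"
  proof
    assume "\<exists>e1\<in>C. \<exists>e2\<in>C. galg_idem G e1 \<and> galg_idem G e2 \<and> e1 \<noteq> (\<lambda>_. 0) \<and> e2 \<noteq> (\<lambda>_. 0) \<and>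
          M e1 e2 = (\<lambda>_. 0) \<and> M e2 e1 = (\<lambda>_. 0) \<and> i = (\<lambda>g. e1 g + e2 g)"
    then obtain e1 e2 where e: "e1 \<in> C" "e2 \<in> C" "M e1 e1 = e1" "M e2 e2 = e2" "e1 \<noteq> 0" "e2 \<noteq> 0"
      "M e1 e2 = 0" "M e2 e1 = 0" "i = e1 + e2"
      by (auto simp: galg_idem_def zero_fun_def plus_fun_def)
    define f1 where "f1 = M (M v e1) u"
    define f2 where "f2 = M (M v e2) u"
    have fC: "f1 \<in> C" "f2 \<in> C" unfolding f1_def f2_def using e u v by (auto simp: C_M)
    have idm: "M (M (M v x) u) (M (M v x) u) = M (M v x) u" if x: "x \<in> C" "M x x = x" for x
    proof -
      have q: "M x (M x u) = M x u" using x by (simp flip: MA)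
      have "M (M (M v x) u) (M (M v x) u) = M v (M x (M (M u v) (M x u)))" by (simp add: MA)
      also have "\<dots> = M v (M x (M x u))" using uv x u by (simp add: C_l C_M)
      also have "\<dots> = M v (M x u)" by (simp only: q)
      finally show ?thesis by (simp add: MA)
    qed
    have orth: "M (M (M v x) u) (M (M v y) u) = 0" if xy: "x \<in> C" "y \<in> C" "M x y = 0" for x y
    proof -
      have q: "M x (M y u) = 0" using xy by (simp flip: MA)
      have "M (M (M v x) u) (M (M v y) u) = M v (M x (M (M u v) (M y u)))" by (simp add: MA)
      also have "\<dots> = M v (M x (M y u))" using uv xy u by (simp add: C_l C_M)
      also have "\<dots> = 0" by (simp add: q)
      finally show ?thesis .
    qed
    have "f1 \<noteq> 0" using invx[OF e(1)] e(5) unfolding f1_def by auto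
    moreover have "f2 \<noteq> 0" using invx[OF e(2)] e(6) unfolding f2_def by auto
    moreover have "i0 = f1 + f2" unfolding i0b f1_def f2_def e(9) by (simp add: M_add_l M_add_r)
    moreover note idm[OF e(1,3)] idm[OF e(2,4)] orth[OF e(1,2,7)] orth[OF e(2,1,8)]
    ultimately show False using p fC unfolding prim_idem_def galg_idem_def f1_def f2_def
      by (auto simp: zero_fun_def plus_fun_def)
  qed
  show ?thesis using iC ii nz nosplit unfolding prim_idem_def i_def galg_idem_def by blast
qed

lemma conj_step:
  assumes p: "prim_idem G C i" and j1: "j1 \<in> C" and j2: "j2 \<in> C"
    and jj1: "M j1 j1 = j1" and jj2: "M j2 j2 = j2"
    and ji: "M (j1 + j2) i = i"
  shows "\<exists>u\<in>C. \<exists>v\<in>C. M u v = e \<and> M v u = e \<and>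
      ((M j1 (M (M u i) v) = M (M u i) v \<and> M (M (M u i) v) j1 = M (M u i) v) \<or>
       (M j2 (M (M u i) v) = M (M u i) v \<and> M (M (M u i) v) j2 = M (M u i) v))"
proof -
  have iC: "i \<in> C" and ii: "M i i = i" and inz: "i \<noteq> 0"
    using p by (auto simp: prim_idem_def galg_idem_def zero_fun_def)
  interpret ci: cor G H i \<pi> by (rule cor_sub(1)[OF iC ii])
  have sub: "Cor G H i \<subseteq> C" by (rule cor_sub(2)[OF iC ii])
  have triv: "\<forall>f\<in>Cor G H i. M f f = f \<longrightarrow> f = 0 \<or> f = i"
  proof (intro ballI impI)
    fix f assume f: "f \<in> Cor G H i" and ff: "M f f = f"
    show "f = 0 \<or> f = i"
    proof (rule ccontr)
      assume ne: "\<not> (f = 0 \<or> f = i)"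
      have fC: "f \<in> C" using f sub by blast
      have if1: "M i f = f" "M f i = f" using f by (auto simp: Cor_def)
      have "i - f \<in> C" using fC iC by (simp add: C_diff)
      moreover have "M (i - f) (i - f) = i - f" using ii if1 ff by (simp add: M_diff_l M_diff_r)
      moreover have "M f (i - f) = 0" "M (i - f) f = 0" using if1 ff by (simp_all add: M_diff_l M_diff_r)
      moreover have "i - f \<noteq> (\<lambda>_. 0)"
      proof
        assume "i - f = (\<lambda>_. 0)"
        then have "\<forall>g. i g = f g" by (simp add: fun_eq_iff)
        then have "i = f" by (simp add: fun_eq_iff)
        then show False using ne by simp
      qed
      moreover have "f \<noteq> (\<lambda>_. 0)" using ne by (auto simp: zero_fun_def)
      moreover have "i = (\<lambda>g. f g + (i - f) g)" by simp
      ultimately have "\<exists>e1\<in>C. \<exists>e2\<in>C. galg_idem G e1 \<and> galg_idem G e2 \<and> e1 \<noteq> (\<lambda>_. 0) \<and> e2 \<noteq> (\<lambda>_. 0) \<and>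
          M e1 e2 = (\<lambda>_. 0) \<and> M e2 e1 = (\<lambda>_. 0) \<and> i = (\<lambda>g. e1 g + e2 g)"
        using fC ff unfolding galg_idem_def zero_fun_def by blast
      then show False using p unfolding prim_idem_def by blast
    qed
  qed
  define x where "x = M (M i j1) i"
  have xC: "x \<in> Cor G H i"
  proof -
    have l: "M i x = x" unfolding x_def using ii by (simp flip: MA)
    have r: "M x i = x" unfolding x_def using ii by (simp add: MA)
    have "x \<in> C" unfolding x_def using iC j1 by (simp add: C_M)
    then show ?thesis using l r by (simp add: Cor_def)
  qed
  have ix: "i - x = M (M i j2) i"
  proof -
    have "M (M i (j1 + j2)) i = i" using ji ii by (simp add: MA)
    then show ?thesis unfolding x_def by (simp add: M_add_l M_add_r algebra_simps)
  qed
  have gen: "\<exists>u\<in>C. \<exists>v\<in>C. M u v = e \<and> M v u = e \<and>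
      M ja (M (M u i) v) = M (M u i) v \<and> M (M (M u i) v) ja = M (M u i) v"
    if ja: "ja \<in> C" and jb: "jb \<in> C" and jja: "M ja ja = ja" and jab: "M (ja + jb) i = i"
      and y: "y \<in> Cor G H i" and xy: "M (M (M i ja) i) y = i" and yx: "M y (M (M i ja) i) = i"
    for ja jb y
  proof -
    have yC: "y \<in> C" using y sub by blast
    have ey: "M i y = y" "M y i = y" using y by (auto simp: Cor_def)
    have "\<exists>u\<in>carrier R. \<exists>v\<in>carrier R. u \<otimes>\<^bsub>R\<^esub> v = \<one>\<^bsub>R\<^esub> \<and> v \<otimes>\<^bsub>R\<^esub> u = \<one>\<^bsub>R\<^esub> \<and>
            ja \<otimes>\<^bsub>R\<^esub> (u \<otimes>\<^bsub>R\<^esub> i \<otimes>\<^bsub>R\<^esub> v) = u \<otimes>\<^bsub>R\<^esub> i \<otimes>\<^bsub>R\<^esub> v \<and>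
            (u \<otimes>\<^bsub>R\<^esub> i \<otimes>\<^bsub>R\<^esub> v) \<otimes>\<^bsub>R\<^esub> ja = u \<otimes>\<^bsub>R\<^esub> i \<otimes>\<^bsub>R\<^esub> v"
      by (rule Rr.conj_below[of i ja jb y]) (use iC ja jb yC ii jja jab ey xy yx in simp_all)
    then show ?thesis by simp
  qed
  have "x \<in> Units (RR G (Cor G H i) i) \<or> i - x \<in> Units (RR G (Cor G H i) i)"
    by (rule ci.local_ring[OF triv xC])
  then show ?thesis
  proof
    assume "x \<in> Units (RR G (Cor G H i) i)"
    then obtain y where y: "y \<in> Cor G H i" "M y x = i" "M x y = i" by (auto simp: Units_def)
    show ?thesis using gen[OF j1 j2 jj1 ji y(1)] y unfolding x_def by blast
  next
    assume "i - x \<in> Units (RR G (Cor G H i) i)"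
    then obtain y where y: "y \<in> Cor G H i" "M y (i - x) = i" "M (i - x) y = i" by (auto simp: Units_def)
    have ji2: "M (j2 + j1) i = i" using ji by (simp add: add.commute)
    show ?thesis using gen[OF j2 j1 jj2 ji2 y(1)] y unfolding ix by blast
  qed
qed

end


context cor begin

lemma main_ind:
  assumes B1sub: "B1 \<subseteq> C" and e0: "prim_idem G C e0"
  shows "card (carrier G) - card F = n \<Longrightarrow> finite F \<Longrightarrow> F \<subseteq> B1 \<Longrightarrow> (\<forall>f\<in>F. M f f = f \<and> f \<noteq> 0)
    \<Longrightarrow> (\<forall>f\<in>F. \<forall>g\<in>F. f \<noteq> g \<longrightarrow> M f g = 0) \<Longrightarrow> j \<in> F \<Longrightarrow> u \<in> C \<Longrightarrow> v \<in> C \<Longrightarrow> M u v = e \<Longrightarrow> M v u = e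
    \<Longrightarrow> M (M (M u e0) v) j = M (M u e0) v \<Longrightarrow> M j (M (M u e0) v) = M (M u e0) v
    \<Longrightarrow> \<exists>j'. prim_idem G B1 j' \<and> (\<exists>u'\<in>C. \<exists>v'\<in>C. M u' v' = e \<and> M v' u' = e \<and>
          M (M (M u' e0) v') j' = M (M u' e0) v' \<and> M j' (M (M u' e0) v') = M (M u' e0) v')"
proof (induction n arbitrary: F j u v rule: less_induct)
  case (less n)
  note hn = less.prems(1) and fF = less.prems(2) and FB = less.prems(3) and Fid = less.prems(4)
    and Forth = less.prems(5) and jF = less.prems(6) and u = less.prems(7) and v = less.prems(8)
    and uv = less.prems(9) and vu = less.prems(10) and ij = less.prems(11) and ji = less.prems(12)
  define i where "i = M (M u e0) v"
  have jB: "j \<in> B1" using FB jF by blast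
  have jj: "M j j = j" and jnz: "j \<noteq> 0" using Fid jF by auto
  have FG: "f \<in> galg G" if "f \<in> F" for f using that FB B1sub by (auto simp: Cor_def)
  show ?case
  proof (cases "prim_idem G B1 j")
    case True
    then show ?thesis using u v uv vu ij ji by blast
  next
    case False
    have "j \<in> B1 \<and> galg_idem G j \<and> j \<noteq> (\<lambda>_. 0)" using jB jj jnz by (simp add: galg_idem_def zero_fun_def)
    then obtain j1 j2 where j12: "j1 \<in> B1" "j2 \<in> B1" "M j1 j1 = j1" "M j2 j2 = j2" "j1 \<noteq> 0" "j2 \<noteq> 0"
        "M j1 j2 = 0" "M j2 j1 = 0" "j = j1 + j2"
      using False unfolding prim_idem_def galg_idem_def by (auto simp: zero_fun_def plus_fun_def)
    have j1C: "j1 \<in> C" and j2C: "j2 \<in> C" using j12 B1sub by auto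
    have iprim: "prim_idem G C i" unfolding i_def by (rule conj_prim[OF e0 u v uv vu])
    have ji': "M (j1 + j2) i = i" using ji unfolding i_def j12(9) .
    have jj1: "M j1 j = j1" "M j j1 = j1" "M j2 j = j2" "M j j2 = j2"
      unfolding j12(9) using j12 by (simp_all add: M_add_l M_add_r)
    have o1: "M jk f = 0 \<and> M f jk = 0" if "f \<in> F" "f \<noteq> j" "jk \<in> {j1, j2}" for f jk
    proof -
      have a: "M jk j = jk" "M j jk = jk" using that(3) jj1 by auto
      have "M j f = 0" "M f j = 0" using Forth that(1,2) jF by auto
      then have "M jk f = 0" "M f jk = 0" using a by (metis MA M_zero_r, metis MA M_zero_l)
      then show ?thesis by simp
    qed
    have nin: "jk \<notin> F - {j}" if "jk \<in> {j1, j2}" for jk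
    proof
      assume "jk \<in> F - {j}"
      then have "M jk jk = 0" using o1[of jk jk] that by auto
      moreover have "M jk jk = jk" "jk \<noteq> 0" using that j12 by auto
      ultimately show False by simp
    qed
    have j1j2: "j1 \<noteq> j2" using j12 by auto
    have step: "\<exists>j'. prim_idem G B1 j' \<and> (\<exists>u'\<in>C. \<exists>v'\<in>C. M u' v' = e \<and> M v' u' = e \<and>
          M (M (M u' e0) v') j' = M (M u' e0) v' \<and> M j' (M (M u' e0) v') = M (M u' e0) v')"
      if jk: "jk \<in> {j1, j2}" and u1: "u1 \<in> C" and v1: "v1 \<in> C" and u1v1: "M u1 v1 = e" and v1u1: "M v1 u1 = e"
        and b1: "M jk (M (M u1 i) v1) = M (M u1 i) v1" and b2: "M (M (M u1 i) v1) jk = M (M u1 i) v1"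
      for jk u1 v1
    proof -
      define F' where "F' = insert j1 (insert j2 (F - {j}))"
      define u' where "u' = M u1 u"
      define v' where "v' = M v v1"
      have u': "u' \<in> C" and v': "v' \<in> C" unfolding u'_def v'_def using u v u1 v1 by (auto simp: C_M)
      have eqi: "M (M u' e0) v' = M (M u1 i) v1" unfolding u'_def v'_def i_def by (simp add: MA)
      have u'v': "M u' v' = e"
      proof -
        have "M u' v' = M u1 (M (M u v) v1)" unfolding u'_def v'_def by (simp add: MA)
        then show ?thesis using uv v1 u1v1 by (simp add: C_l)
      qed
      have v'u': "M v' u' = e"
      proof -
        have "M v' u' = M v (M (M v1 u1) u)" unfolding u'_def v'_def by (simp add: MA)
        then show ?thesis using vu u v1u1 by (simp add: C_l)
      qed
      have fF': "finite F'" unfolding F'_def using fF by simp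
      have cF': "card F' = card F + 1"
      proof -
        have "card F' = Suc (Suc (card (F - {j})))"
          unfolding F'_def using fF nin j1j2 by (simp add: card_insert_if)
        moreover have "card (F - {j}) = card F - 1" using fF jF by simp
        moreover have "card F \<ge> 1" using fF jF by (metis One_nat_def Suc_leI card_gt_0_iff empty_iff)
        ultimately show ?thesis by simp
      qed
      have F'B: "F' \<subseteq> B1" unfolding F'_def using FB j12 by auto
      have F'id: "\<forall>f\<in>F'. M f f = f \<and> f \<noteq> 0" unfolding F'_def using Fid j12 by auto
      have F'orth: "\<forall>f\<in>F'. \<forall>g\<in>F'. f \<noteq> g \<longrightarrow> M f g = 0"
        unfolding F'_def using Forth j12 o1 by auto
      have F'G: "\<forall>f\<in>F'. f \<in> galg G \<and> M f f = f \<and> f \<noteq> 0"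
        using F'id F'B B1sub by (auto simp: Cor_def)
      have "card F' \<le> card (carrier G)" by (rule orth_card[OF fin fF' F'G F'orth])
      then have lt: "card (carrier G) - card F' < n" using hn cF' by simp
      have jkF': "jk \<in> F'" unfolding F'_def using jk by auto
      show ?thesis
        using less.IH[OF lt refl fF' F'B F'id F'orth jkF' u' v' u'v' v'u'] b1 b2 unfolding eqi by blast
    qed
    obtain u1 v1 where uv1: "u1 \<in> C" "v1 \<in> C" "M u1 v1 = e" "M v1 u1 = e"
      and cases: "(M j1 (M (M u1 i) v1) = M (M u1 i) v1 \<and> M (M (M u1 i) v1) j1 = M (M u1 i) v1) \<or>
       (M j2 (M (M u1 i) v1) = M (M u1 i) v1 \<and> M (M (M u1 i) v1) j2 = M (M u1 i) v1)"
      using conj_step[OF iprim j1C j2C j12(3) j12(4) ji'] by blast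
    from cases show ?thesis
    proof
      assume "M j1 (M (M u1 i) v1) = M (M u1 i) v1 \<and> M (M (M u1 i) v1) j1 = M (M u1 i) v1"
      then show ?thesis using step[of j1 u1 v1] uv1 by blast
    next
      assume "M j2 (M (M u1 i) v1) = M (M u1 i) v1 \<and> M (M (M u1 i) v1) j2 = M (M u1 i) v1"
      then show ?thesis using step[of j2 u1 v1] uv1 by blast
    qed
  qed
qed

end

theorem lemma2p4:
  fixes \<pi> :: "'o::{idom, ring_char_0}" and p :: nat
    and G :: "('g,'m) monoid_scheme" and N H :: "'g set" and b :: "'g \<Rightarrow> 'o"
    and \<alpha>h :: "('g \<Rightarrow> 'o) set"
  assumes "dvr_uniformizer \<pi>" and "pi_adically_complete \<pi>"
    and "Factorial_Ring.prime p" and "\<pi> dvd of_nat p"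
    and "group G" and "finite (carrier G)" and "N \<lhd> G"
    and "is_block G N b"
    and "\<forall>g\<in>carrier G. gconj G g b = b"
    and "subgroup H G"
    and "\<alpha>h \<in> points G H {galg_mult G x b | x. x \<in> galg G} b"
  shows "\<exists>\<alpha> \<in> points G H {galg_mult G x b | x. x \<in> galg_on N} b.
           \<exists>ih\<in>\<alpha>h. \<exists>j\<in>\<alpha>. galg_mult G ih j = ih \<and> galg_mult G j ih = ih"
proof -
  interpret grp: group G by (rule assms(5))
  have Nsub: "subgroup N G" using assms(7) by (rule normal_imp_subgroup)
  have bprim: "b \<in> center_of G (galg_on N)" "galg_mult G b b = b" "b \<noteq> (\<lambda>_. 0)"
    using assms(8) unfolding is_block_def prim_idem_def galg_idem_def by auto
  have bN: "b \<in> galg_on N" using bprim(1) by (simp add: center_of_def)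
  have bG: "b \<in> galg G" using bN grp.galg_on_galg[OF Nsub] by blast
  have Hc: "h \<in> carrier G" if "h \<in> H" for h using assms(10) that subgroup.subset by blast
  have bH: "\<forall>h\<in>H. gconj G h b = b" using assms(9) Hc by blast
  interpret c: cor G H b \<pi>
    unfolding cor_def cor_axioms_def using assms(5,6,10,1,2) bG bprim(2) bH by auto
  have cen: "galg_mult G b x = galg_mult G x b" for x by (rule grp.M_central[OF assms(9)])
  have A0: "fixed_pts G H {galg_mult G x b | x. x \<in> galg G} = Cor G H b"
  proof
    show "fixed_pts G H {galg_mult G x b | x. x \<in> galg G} \<subseteq> Cor G H b"
    proof
      fix z assume "z \<in> fixed_pts G H {galg_mult G x b | x. x \<in> galg G}"
      then obtain x where x: "z = galg_mult G x b" "x \<in> galg G" "\<forall>h\<in>H. gconj G h z = z"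
        unfolding fixed_pts_def by blast
      have zb: "galg_mult G z b = z" unfolding x(1) using bprim(2) by (simp add: c.MA)
      then show "z \<in> Cor G H b" using x grp.M_galg cen by (simp add: Cor_def)
    qed
    show "Cor G H b \<subseteq> fixed_pts G H {galg_mult G x b | x. x \<in> galg G}"
    proof
      fix z assume z: "z \<in> Cor G H b"
      then have "z = galg_mult G z b" "z \<in> galg G" "\<forall>h\<in>H. gconj G h z = z" by (auto simp: Cor_def)
      then show "z \<in> fixed_pts G H {galg_mult G x b | x. x \<in> galg G}" unfolding fixed_pts_def by blast
    qed
  qed
  define B1 where "B1 = fixed_pts G H {galg_mult G x b | x. x \<in> galg_on N}"
  have B1sub: "B1 \<subseteq> Cor G H b"
  proof
    fix z assume "z \<in> B1"
    then obtain x where x: "z = galg_mult G x b" "x \<in> galg_on N" "\<forall>h\<in>H. gconj G h z = z"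
      unfolding B1_def fixed_pts_def by blast
    have zb: "galg_mult G z b = z" unfolding x(1) using bprim(2) by (simp add: c.MA)
    then show "z \<in> Cor G H b" using x grp.M_galg cen by (simp add: Cor_def)
  qed
  have bB1: "b \<in> B1"
  proof -
    have "b = galg_mult G b b" using bprim(2) by simp
    then have "b \<in> {galg_mult G x b | x. x \<in> galg_on N}" using bN by blast
    then show ?thesis unfolding B1_def fixed_pts_def using bH by blast
  qed
  obtain e0 where e0: "prim_idem G (Cor G H b) e0"
    and ah: "\<alpha>h = {galg_mult G (galg_mult G u e0) v | u v. u \<in> Cor G H b \<and> v \<in> Cor G H b \<and>
             galg_mult G u v = b \<and> galg_mult G v u = b}"
    using assms(11) unfolding points_def A0 by blast
  have e0C: "e0 \<in> Cor G H b" using e0 by (simp add: prim_idem_def)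
  have bC: "b \<in> Cor G H b" by (rule c.C_e)
  have e0b: "galg_mult G (galg_mult G (galg_mult G b e0) b) b = galg_mult G (galg_mult G b e0) b"
    "galg_mult G b (galg_mult G (galg_mult G b e0) b) = galg_mult G (galg_mult G b e0) b"
    using e0C by (simp_all add: c.C_l c.C_r)
  obtain j' u' v' where j': "prim_idem G B1 j'" and u': "u' \<in> Cor G H b" and v': "v' \<in> Cor G H b"
    and u'v': "galg_mult G u' v' = b" and v'u': "galg_mult G v' u' = b"
    and r1: "galg_mult G (galg_mult G (galg_mult G u' e0) v') j' = galg_mult G (galg_mult G u' e0) v'"
    and r2: "galg_mult G j' (galg_mult G (galg_mult G u' e0) v') = galg_mult G (galg_mult G u' e0) v'"
    using c.main_ind[OF B1sub e0 refl, of "{b}" b b b] bB1 bprim(2,3) bC e0b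
    by (auto simp: zero_fun_def)
  define \<alpha> where "\<alpha> = {galg_mult G (galg_mult G u j') v | u v. u \<in> B1 \<and> v \<in> B1 \<and>
             galg_mult G u v = b \<and> galg_mult G v u = b}"
  have \<alpha>P: "\<alpha> \<in> points G H {galg_mult G x b | x. x \<in> galg_on N} b"
    unfolding points_def \<alpha>_def using j' unfolding B1_def by blast
  have j'C: "j' \<in> Cor G H b" using j' B1sub by (auto simp: prim_idem_def)
  have j'\<alpha>: "j' \<in> \<alpha>"
  proof -
    have "galg_mult G (galg_mult G b j') b = j'" using j'C by (simp add: c.C_l c.C_r)
    then show ?thesis unfolding \<alpha>_def using bB1 bprim(2) by force
  qed
  have ih: "galg_mult G (galg_mult G u' e0) v' \<in> \<alpha>h" unfolding ah using u' v' u'v' v'u' by blast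
  show ?thesis using \<alpha>P ih j'\<alpha> r1 r2 by blast
qed


end
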